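(* For every integer $n\ge 3$, the element $P_n$ lies in $\mathbb{Q}[x_1,\dots,x_n]$ and is an irreducible polynomial over $\mathbb{Q}$.
   Context: Let $n\ge 1$ and let $x_1,\dots,x_n$ be algebraically independent indeterminates over $\mathbb{Q}$. In a fixed algebraic closure of $\mathbb{Q}(x_1,\dots,x_n)$ fix elements $y_1,\dots,y_n$ with $y_i^2=1-x_i^2$. For indices $i_1<\dots<i_m$ define $\mathrm{EC}_m(x_{i_1},\dots,x_{i_m})=\sum_{S\subseteq\{i_1,\dots,i_m\},\ |S|\text{ even}}(-1)^{|S|/2}\prod_{j\in S}y_j\prod_{j\notin S}x_j$ (the formal expansion of $\cos(\theta_{i_1}+\dots+\theta_{i_m})$ with $x_j=\cos\theta_j$, $y_j=\sin\theta_j$); write $\mathrm{EC}_m=\mathrm{EC}_m(x_1,\dots,x_m)$. For $n\ge 2$ let $G_{n-1}$ denote the Galois group of $\mathbb{Q}(x_1,\dots,x_n,\ y_iy_j:1\le i<j\le n-1)$ over $\mathbb{Q}(x_1,\dots,x_n)$ (trivial for $n=2$). Define $P_1=x_1-1$ and, for $n\ge 2$, $P_n=\prod_{\sigma\in G_{n-1}}\bigl(x_n-\sigma(\mathrm{EC}_{n-1}(x_1,\dots,x_{n-1}))\bigr)$; thus $P_2=x_2-x_1$ and $P_3=x_1^2+x_2^2+x_3^2-2x_1x_2x_3-1$. *)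

theory Defs
  imports Complex_Main "HOL-Library.Poly_Mapping" "HOL-Computational_Algebra.Factorial_Ring"
begin

text \<open>Multivariate polynomials over the rationals in countably many variables
  indexed by nat: a polynomial is a finitely supported map from monomials
  (finitely supported exponent vectors nat =>0 nat) to coefficients.\<close>

type_synonym mpoly = "(nat \<Rightarrow>\<^sub>0 nat) \<Rightarrow>\<^sub>0 rat"

definition var :: "nat \<Rightarrow> mpoly" where
  "var i = Poly_Mapping.single (Poly_Mapping.single i 1) 1"

text \<open>For a fixed n: the variable x_i is var i (1 <= i <= n),
  and the symbol y_i is var (n + i) (1 <= i <= n - 1).\<close>

definition X :: "nat \<Rightarrow> mpoly" where
  "X i = var i"

definition Y :: "nat \<Rightarrow> nat \<Rightarrow> mpoly" where
  "Y n i = var (n + i)"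

text \<open>Formal expansion of cos(theta_1 + ... + theta_m), with the sines given by ys.\<close>

definition EC :: "(nat \<Rightarrow> mpoly) \<Rightarrow> nat \<Rightarrow> mpoly" where
  "EC ys m = (\<Sum>S \<in> {S \<in> Pow {1..m}. even (card S)}.
      (-1) ^ (card S div 2) * (\<Prod>j\<in>S. ys j) * (\<Prod>j\<in>{1..m} - S. X j))"

text \<open>The automorphisms in G_(n-1) of Q(x_1..x_n, y_i y_j : i<j<=n-1) over
  Q(x_1..x_n) are given by sign changes of the y_j (modulo a global sign);
  they are indexed by the set T of flipped indices, T a subset of {2..n-1}.\<close>

definition sigma_y :: "nat \<Rightarrow> nat set \<Rightarrow> nat \<Rightarrow> mpoly" where
  "sigma_y n T j = (if j \<in> T then - Y n j else Y n j)"

text \<open>A polynomial in x and y representing P_n (for n >= 2).\<close>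

definition P_lift :: "nat \<Rightarrow> mpoly" where
  "P_lift n = (\<Prod>T \<in> Pow {2..n-1}. (X n - EC (sigma_y n T) (n - 1)))"

definition in_Qx :: "nat \<Rightarrow> mpoly \<Rightarrow> bool" where
  "in_Qx n p \<longleftrightarrow> (\<forall>m \<in> Poly_Mapping.keys p. Poly_Mapping.keys m \<subseteq> {1..n})"

text \<open>Congruence modulo the ideal generated by y_i^2 - (1 - x_i^2), 1 <= i <= n-1,
  i.e. equality of the images in the algebraic closure.\<close>

definition cong_y :: "nat \<Rightarrow> mpoly \<Rightarrow> mpoly \<Rightarrow> bool" where
  "cong_y n a b \<longleftrightarrow> (\<exists>c :: nat \<Rightarrow> mpoly.
      a - b = (\<Sum>i\<in>{1..n-1}. c i * (Y n i ^ 2 - (1 - X i ^ 2))))"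

end

theory Submission
  imports Defs "Jordan_Normal_Form.Char_Poly"
begin


lemma pm_expand: "(p::'a \<Rightarrow>\<^sub>0 'b::comm_monoid_add) = (\<Sum>k\<in>Poly_Mapping.keys p. Poly_Mapping.single k (Poly_Mapping.lookup p k))"
  by (rule poly_mapping_eqI) (auto simp: lookup_sum lookup_single when_def in_keys_iff
        sum.delta'[OF finite_keys] split: if_splits)

lemma lin_induct:
  fixes P :: "('a \<Rightarrow>\<^sub>0 'b::comm_monoid_add) \<Rightarrow> bool"
  assumes "P 0" "\<And>k c. P (Poly_Mapping.single k c)" "\<And>p q. P p \<Longrightarrow> P q \<Longrightarrow> P (p + q)"
  shows "P p"
proof -
  have "P (\<Sum>k\<in>K. Poly_Mapping.single k (Poly_Mapping.lookup p k))" if "finite K" for K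
    using that by (induction K rule: finite_induct) (auto simp: assms)
  then show ?thesis by (subst pm_expand) simp
qed

definition lext :: "('b::zero \<Rightarrow> 'c::comm_semiring_1) \<Rightarrow> ('a \<Rightarrow> 'c) \<Rightarrow> ('a \<Rightarrow>\<^sub>0 'b) \<Rightarrow> 'c" where
  "lext h g p = (\<Sum>k\<in>Poly_Mapping.keys p. h (Poly_Mapping.lookup p k) * g k)"

lemma lext_superset:
  assumes "h 0 = 0" "finite S" "Poly_Mapping.keys p \<subseteq> S"
  shows "lext h g p = (\<Sum>k\<in>S. h (Poly_Mapping.lookup p k) * g k)"
  unfolding lext_def using assms
  by (intro sum.mono_neutral_left) (auto simp: in_keys_iff)

lemma lext_add:
  assumes "h 0 = 0" "\<And>a b. h (a + b) = h a + h b"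
  shows "lext h g (p + q) = lext h g p + lext h g q"
proof -
  let ?S = "Poly_Mapping.keys p \<union> Poly_Mapping.keys q"
  have "lext h g (p + q) = (\<Sum>k\<in>?S. h (Poly_Mapping.lookup (p+q) k) * g k)"
    using keys_add[of p q] by (intro lext_superset assms) auto
  also have "\<dots> = (\<Sum>k\<in>?S. h (Poly_Mapping.lookup p k) * g k) + (\<Sum>k\<in>?S. h (Poly_Mapping.lookup q k) * g k)"
    by (simp add: lookup_add assms(2) distrib_right sum.distrib)
  also have "\<dots> = lext h g p + lext h g q"
    using lext_superset[of h ?S p g, OF assms(1)] lext_superset[of h ?S q g, OF assms(1)] by auto
  finally show ?thesis .
qed

lemma lext_single:
  assumes "h 0 = 0"
  shows "lext h g (Poly_Mapping.single k c) = h c * g k"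
  using assms by (auto simp: lext_def)

lemma lext_zero: "lext h g 0 = 0"
  by (simp add: lext_def)

lemma lext_mult:
  fixes h :: "'b::comm_semiring_1 \<Rightarrow> 'c::comm_semiring_1" and g :: "'a::comm_monoid_add \<Rightarrow> 'c"
  assumes h0: "h 0 = 0" and ha: "\<And>a b. h (a + b) = h a + h b" and hm: "\<And>a b. h (a * b) = h a * h b"
    and gm: "\<And>k l. g (k + l) = g k * g l"
  shows "lext h g (p * q) = lext h g p * lext h g q"
proof (induction p rule: lin_induct)
  case 1 then show ?case by (simp add: lext_zero)
next
  case (2 k c)
  show ?case
  proof (induction q rule: lin_induct)
    case 1 then show ?case by (simp add: lext_zero)
  next
    case (2 l d)
    then show ?case by (simp add: mult_single lext_single h0 hm gm ac_simps)
  next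
    case (3 q1 q2)
    then show ?case by (simp add: distrib_left lext_add h0 ha)
  qed
next
  case (3 p1 p2)
  then show ?case by (simp add: distrib_right lext_add h0 ha)
qed

definition mon :: "(nat \<Rightarrow> 'c::comm_semiring_1) \<Rightarrow> (nat \<Rightarrow>\<^sub>0 nat) \<Rightarrow> 'c" where
  "mon f m = (\<Prod>i\<in>Poly_Mapping.keys m. f i ^ Poly_Mapping.lookup m i)"

lemma mon_superset:
  assumes "finite S" "Poly_Mapping.keys m \<subseteq> S"
  shows "mon f m = (\<Prod>i\<in>S. f i ^ Poly_Mapping.lookup m i)"
  unfolding mon_def using assms
  by (intro prod.mono_neutral_left) (auto simp: in_keys_iff)

lemma mon_add: "mon f (m1 + m2) = mon f m1 * mon f m2"
proof -
  let ?S = "Poly_Mapping.keys m1 \<union> Poly_Mapping.keys m2"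
  have "mon f (m1 + m2) = (\<Prod>i\<in>?S. f i ^ Poly_Mapping.lookup (m1+m2) i)"
    using keys_add[of m1 m2] by (intro mon_superset) auto
  also have "\<dots> = (\<Prod>i\<in>?S. f i ^ Poly_Mapping.lookup m1 i) * (\<Prod>i\<in>?S. f i ^ Poly_Mapping.lookup m2 i)"
    by (simp add: lookup_add power_add prod.distrib)
  also have "\<dots> = mon f m1 * mon f m2"
    by (subst (1 2) mon_superset) auto
  finally show ?thesis .
qed

lemma mon_zero [simp]: "mon f 0 = 1"
  by (simp add: mon_def)

lemma mon_single [simp]: "mon f (Poly_Mapping.single i k) = f i ^ k"
  by (simp add: mon_def)

definition ins :: "(rat \<Rightarrow> 'c::comm_ring_1) \<Rightarrow> (nat \<Rightarrow> 'c) \<Rightarrow> mpoly \<Rightarrow> 'c" where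
  "ins h f = lext h (mon f)"

lemma ins_hom:
  assumes "comm_ring_hom h"
  shows "comm_ring_hom (ins h f)"
proof -
  interpret h: comm_ring_hom h by fact
  show ?thesis
  proof
    show "ins h f 0 = 0" by (simp add: ins_def lext_zero)
    show "ins h f 1 = 1"
      by (simp add: ins_def lext_single flip: single_one)
    fix p q :: mpoly
    show "ins h f (p + q) = ins h f p + ins h f q"
      unfolding ins_def by (rule lext_add) (simp_all add: h.hom_add)
    show "ins h f (p * q) = ins h f p * ins h f q"
      unfolding ins_def by (rule lext_mult) (simp_all add: h.hom_add h.hom_mult mon_add)
  qed
qed

lemma ins_single: "comm_ring_hom h \<Longrightarrow> ins h f (Poly_Mapping.single m c) = h c * mon f m"
proof -
  assume "comm_ring_hom h"
  then interpret comm_ring_hom h .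
  show ?thesis by (simp add: ins_def lext_single)
qed

lemma ins_var [simp]: "comm_ring_hom h \<Longrightarrow> ins h f (var i) = f i"
proof -
  assume a: "comm_ring_hom h"
  then interpret comm_ring_hom h .
  show ?thesis by (simp add: var_def ins_single[OF a])
qed

lemma ins_const [simp]: "comm_ring_hom h \<Longrightarrow> ins h f (Poly_Mapping.single 0 c) = h c"
  by (simp add: ins_single)

lemma ins_comp:
  assumes "comm_ring_hom g"
  shows "g (ins h f p) = ins (g \<circ> h) (g \<circ> f) p"
proof -
  interpret g: comm_ring_hom g by fact
  show ?thesis
    by (simp add: ins_def lext_def mon_def g.hom_sum g.hom_mult g.hom_prod g.hom_power)
qed

lemma ins_cong:
  assumes "\<And>m i. m \<in> Poly_Mapping.keys p \<Longrightarrow> i \<in> Poly_Mapping.keys m \<Longrightarrow> f i = f' i"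
  shows "ins h f p = ins h f' p"
  unfolding ins_def lext_def mon_def using assms
  by (intro sum.cong refl arg_cong2[where f="(*)"] prod.cong) auto

lemma single_pow: "Poly_Mapping.single (Poly_Mapping.single i (1::nat)) (1::'b::comm_semiring_1) ^ n = Poly_Mapping.single (Poly_Mapping.single i n) 1"
  by (induction n) (simp_all add: mult_single flip: single_add)

lemma single_rat_hom: "comm_ring_hom (Poly_Mapping.single 0 :: rat \<Rightarrow> mpoly)"
  by unfold_locales (simp_all add: single_add mult_single)

lemma single_prod: "finite S \<Longrightarrow> (\<Prod>i\<in>S. Poly_Mapping.single (g i) (1::'b::comm_semiring_1)) = Poly_Mapping.single (\<Sum>i\<in>S. g i) 1"
  by (induction S rule: finite_induct) (simp_all add: mult_single)

lemma mon_var: "mon var m = (Poly_Mapping.single m 1 :: mpoly)"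
proof -
  have "mon var m = (\<Prod>i\<in>Poly_Mapping.keys m. Poly_Mapping.single (Poly_Mapping.single i (Poly_Mapping.lookup m i)) (1::rat))"
    unfolding mon_def var_def single_pow by simp
  also have "\<dots> = Poly_Mapping.single m 1"
    by (simp add: single_prod flip: pm_expand)
  finally show ?thesis .
qed

lemma ins_id: "ins (Poly_Mapping.single 0) var p = p"
proof (induction p rule: lin_induct)
  case 1 then show ?case by (simp add: ins_def lext_zero)
next
  case (2 k c) then show ?case by (simp add: ins_single single_rat_hom mon_var mult_single)
next
  case (3 p q)
  interpret comm_ring_hom "ins (Poly_Mapping.single 0) var" by (rule ins_hom[OF single_rat_hom])
  from 3 show ?case by (simp add: hom_add)
qed


lemma crh_comp: "comm_ring_hom f \<Longrightarrow> comm_ring_hom g \<Longrightarrow> comm_ring_hom (g \<circ> f)"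
proof -
  assume f: "comm_ring_hom f" and g: "comm_ring_hom g"
  interpret f: comm_ring_hom f by fact
  interpret g: comm_ring_hom g by fact
  show ?thesis by unfold_locales (simp_all add: f.hom_add g.hom_add f.hom_mult g.hom_mult)
qed

lemma crh_map_poly: "comm_ring_hom h \<Longrightarrow> comm_ring_hom (map_poly h)"
proof -
  assume a: "comm_ring_hom h"
  interpret map_poly_comm_ring_hom h using a by (simp add: map_poly_comm_ring_hom_def)
  show ?thesis by unfold_locales (simp_all add: hom_add hom_mult)
qed

lemma crh_poly: "comm_ring_hom (\<lambda>p. poly p x)"
  by unfold_locales simp_all

lemma crh_const_poly: "comm_ring_hom (\<lambda>x::'a::comm_ring_1. [:x:])"
  by unfold_locales simp_all

lemma crh_of_rat: "comm_ring_hom (of_rat :: rat \<Rightarrow> 'a::field_char_0)"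
  by unfold_locales (simp_all add: of_rat_add of_rat_mult)

lemma crh_id: "comm_ring_hom (\<lambda>x. x)"
  by unfold_locales simp_all

section \<open>Supports and the identity theorem\<close>

definition supp_in :: "nat set \<Rightarrow> mpoly \<Rightarrow> bool" where
  "supp_in A q \<longleftrightarrow> (\<forall>m\<in>Poly_Mapping.keys q. Poly_Mapping.keys m \<subseteq> A)"

lemma supp_in_0 [simp]: "supp_in A 0"
  by (simp add: supp_in_def)

lemma supp_in_add: "supp_in A p \<Longrightarrow> supp_in A q \<Longrightarrow> supp_in A (p + q)"
  using keys_add[of p q] by (auto simp: supp_in_def)

lemma supp_in_uminus: "supp_in A p \<Longrightarrow> supp_in A (- p)"
  by (simp add: supp_in_def)

lemma supp_in_diff: "supp_in A p \<Longrightarrow> supp_in A q \<Longrightarrow> supp_in A (p - q)"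
  using supp_in_add[of A p "- q"] supp_in_uminus[of A q] by simp

lemma supp_in_mult: "supp_in A p \<Longrightarrow> supp_in A q \<Longrightarrow> supp_in A (p * q)"
proof (unfold supp_in_def, intro ballI)
  fix m assume p: "\<forall>m\<in>Poly_Mapping.keys p. Poly_Mapping.keys m \<subseteq> A"
    and q: "\<forall>m\<in>Poly_Mapping.keys q. Poly_Mapping.keys m \<subseteq> A" and m: "m \<in> Poly_Mapping.keys (p * q)"
  then obtain a b where "m = a + b" "a \<in> Poly_Mapping.keys p" "b \<in> Poly_Mapping.keys q"
    using keys_mult[of p q] by blast
  then show "Poly_Mapping.keys m \<subseteq> A" using p q keys_add[of a b] by blast
qed

lemma supp_in_const [simp]: "supp_in A (Poly_Mapping.single 0 c)"
  by (simp add: supp_in_def)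

lemma supp_in_1 [simp]: "supp_in A 1"
  by (simp add: supp_in_def)

lemma supp_in_var: "i \<in> A \<Longrightarrow> supp_in A (var i)"
  by (simp add: supp_in_def var_def)

lemma closed_sum:
  assumes "Q 0" "\<And>a b. Q a \<Longrightarrow> Q b \<Longrightarrow> Q (a + b)" "\<And>x. x \<in> S \<Longrightarrow> Q (g x)"
  shows "Q (sum g S)"
  using assms(3)
  by (induction S rule: infinite_finite_induct) (auto simp: assms(1,2))

lemma closed_prod:
  assumes "Q 1" "\<And>a b. Q a \<Longrightarrow> Q b \<Longrightarrow> Q (a * b)" "\<And>x. x \<in> S \<Longrightarrow> Q (g x)"
  shows "Q (prod g S)"
  using assms(3)
  by (induction S rule: infinite_finite_induct) (auto simp: assms(1,2))

lemma closed_power: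
  assumes "Q 1" "\<And>a b. Q a \<Longrightarrow> Q b \<Longrightarrow> Q (a * b)" "Q x"
  shows "Q (x ^ k)"
  by (induction k) (auto simp: assms)

lemma ins_closed:
  assumes Q0: "Q 0" and Q1: "Q 1" and Qa: "\<And>a b. Q a \<Longrightarrow> Q b \<Longrightarrow> Q (a + b)"
    and Qm: "\<And>a b. Q a \<Longrightarrow> Q b \<Longrightarrow> Q (a * b)"
    and Qh: "\<And>c. Q (h c)" and Qf: "\<And>m i. m \<in> Poly_Mapping.keys p \<Longrightarrow> i \<in> Poly_Mapping.keys m \<Longrightarrow> Q (f i)"
  shows "Q (ins h f p)"
  unfolding ins_def lext_def mon_def
proof (rule closed_sum[where Q=Q, OF Q0 Qa])
  fix m assume m: "m \<in> Poly_Mapping.keys p"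
  have "Q (\<Prod>i\<in>Poly_Mapping.keys m. f i ^ Poly_Mapping.lookup m i)"
  proof (rule closed_prod[where Q=Q, OF Q1 Qm])
    fix i assume "i \<in> Poly_Mapping.keys m"
    then show "Q (f i ^ Poly_Mapping.lookup m i)"
      using closed_power[where Q=Q, OF Q1 Qm Qf[OF m]] by blast
  qed
  then show "Q (h (Poly_Mapping.lookup p m) * (\<Prod>i\<in>Poly_Mapping.keys m. f i ^ Poly_Mapping.lookup m i))"
    by (rule Qm[OF Qh])
qed

lemma supp_in_sum: "(\<And>x. x \<in> S \<Longrightarrow> supp_in A (g x)) \<Longrightarrow> supp_in A (sum g S)"
  by (rule closed_sum) (auto intro: supp_in_add)

lemma supp_in_prod: "(\<And>x. x \<in> S \<Longrightarrow> supp_in A (g x)) \<Longrightarrow> supp_in A (prod g S)"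
  by (rule closed_prod) (auto intro: supp_in_mult)

lemma supp_in_power: "supp_in A x \<Longrightarrow> supp_in A (x ^ k)"
  by (rule closed_power) (auto intro: supp_in_mult)

definition PS :: "nat set \<Rightarrow> mpoly poly \<Rightarrow> bool" where
  "PS A P \<longleftrightarrow> (\<forall>k. supp_in A (coeff P k))"

lemma PS_add: "PS A P \<Longrightarrow> PS A Q \<Longrightarrow> PS A (P + Q)"
  by (simp add: PS_def supp_in_add)

lemma PS_mult: "PS A P \<Longrightarrow> PS A Q \<Longrightarrow> PS A (P * Q)"
  unfolding PS_def coeff_mult by (auto intro!: supp_in_sum supp_in_mult)

lemma PS_const: "supp_in A c \<Longrightarrow> PS A [:c:]"
  by (simp add: PS_def coeff_pCons split: nat.splits)

lemma PS_0: "PS A 0"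
  by (simp add: PS_def)

lemma PS_1: "PS A 1"
  by (simp add: PS_def coeff_1)

lemma PS_X: "PS A [:0,1:]"
  by (simp add: PS_def coeff_pCons split: nat.splits)

definition hP :: "rat \<Rightarrow> mpoly poly" where "hP c = [:Poly_Mapping.single 0 c:]"

lemma crh_hP: "comm_ring_hom hP"
  using crh_comp[OF single_rat_hom crh_const_poly] unfolding hP_def comp_def .

definition tP :: "nat \<Rightarrow> mpoly \<Rightarrow> mpoly poly" where
  "tP j = ins hP (\<lambda>i. if i = j then [:0,1:] else [:var i:])"

lemma crh_tP: "comm_ring_hom (tP j)"
  unfolding tP_def by (rule ins_hom[OF crh_hP])

lemma tP_coeffs: "supp_in (insert j A) c \<Longrightarrow> PS A (tP j c)"
  unfolding tP_def
  by (rule ins_closed[where Q="PS A"])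
     (auto simp: supp_in_def hP_def intro!: PS_0 PS_1 PS_add PS_mult PS_const PS_X supp_in_var)

lemma fromP: "poly (tP j c) (var j) = c"
proof -
  have "poly (tP j c) (var j) = ins ((\<lambda>P. poly P (var j)) \<circ> hP) ((\<lambda>P. poly P (var j)) \<circ> (\<lambda>i. if i = j then [:0,1:] else [:var i:])) c"
    unfolding tP_def by (rule ins_comp[OF crh_poly])
  also have "\<dots> = ins (Poly_Mapping.single 0) var c"
    by (intro arg_cong2[where f="\<lambda>a b. ins a b c"]) (auto simp: hP_def fun_eq_iff)
  finally show ?thesis by (simp add: ins_id)
qed

abbreviation ev :: "(nat \<Rightarrow> complex) \<Rightarrow> mpoly \<Rightarrow> complex" where
  "ev v \<equiv> ins of_rat v"

lemma crh_ev: "comm_ring_hom (ev v)"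
  by (rule ins_hom[OF crh_of_rat])

lemma ev_0 [simp]: "ev v 0 = 0" and ev_1 [simp]: "ev v 1 = 1"
proof -
  interpret comm_ring_hom "ev v" by (rule crh_ev)
  show "ev v 0 = 0" "ev v 1 = 1" by simp_all
qed

lemma map_poly_const: "f 0 = 0 \<Longrightarrow> map_poly f [:x:] = [:f x:]"
  by (intro poly_eqI) (simp add: coeff_map_poly coeff_pCons split: nat.splits)

lemma ev_tP: "poly (map_poly (ev v) (tP j c)) t = ev (v(j := t)) c"
proof -
  let ?g = "(\<lambda>P. poly P t) \<circ> map_poly (ev v)"
  have g: "comm_ring_hom ?g" by (rule crh_comp[OF crh_map_poly[OF crh_ev] crh_poly])
  have "?g (tP j c) = ins (?g \<circ> hP) (?g \<circ> (\<lambda>i. if i = j then [:0,1:] else [:var i:])) c"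
    unfolding tP_def by (rule ins_comp[OF g])
  also have "\<dots> = ev (v(j := t)) c"
    by (intro arg_cong2[where f="\<lambda>a b. ins a b c"])
       (auto simp: hP_def fun_eq_iff map_poly_const map_poly_pCons ins_const[OF crh_of_rat] ins_var[OF crh_of_rat])
  finally show ?thesis by simp
qed

lemma keys_sub0: "supp_in {} c \<Longrightarrow> c = Poly_Mapping.single 0 (Poly_Mapping.lookup c 0)"
  by (rule poly_mapping_eqI) (auto simp: supp_in_def lookup_single when_def in_keys_iff)

lemma ident_K: "supp_in {..<K} c \<Longrightarrow> (\<forall>v. ev v c = 0) \<Longrightarrow> c = 0"
proof (induction K arbitrary: c)
  case 0
  then have c: "c = Poly_Mapping.single 0 (Poly_Mapping.lookup c 0)" by (intro keys_sub0) simp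
  have "ev (\<lambda>_. 0) c = 0" using 0 by blast
  then have "of_rat (Poly_Mapping.lookup c 0) = (0::complex)"
    by (subst (asm) c) (simp add: ins_const[OF crh_of_rat])
  then show ?case by (subst c) simp
next
  case (Suc K)
  let ?P = "tP K c"
  have e: "insert K {..<K} = {..<Suc K}" by auto
  have PS: "PS {..<K} ?P" by (rule tP_coeffs) (simp only: e Suc.prems(1))
  have mp0: "map_poly (ev v) ?P = 0" for v
  proof -
    have "poly (map_poly (ev v) ?P) t = 0" for t using Suc.prems(2) by (simp add: ev_tP)
    then show ?thesis using poly_all_0_iff_0 by blast
  qed
  have "coeff ?P k = 0" for k
  proof (rule Suc.IH)
    show "supp_in {..<K} (coeff ?P k)" using PS by (simp add: PS_def)
    show "\<forall>v. ev v (coeff ?P k) = 0"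
    proof
      fix v
      have "coeff (map_poly (ev v) ?P) k = ev v (coeff ?P k)"
        by (rule coeff_map_poly) simp
      then show "ev v (coeff ?P k) = 0" using mp0[of v] by simp
    qed
  qed
  then have "?P = 0" by (intro poly_eqI) simp
  then show ?case using fromP[of K c] by simp
qed

lemma supp_in_bound: "\<exists>K. supp_in {..<K} c"
proof -
  have fin: "finite (\<Union>m\<in>Poly_Mapping.keys c. Poly_Mapping.keys m)" by simp
  obtain K where K: "(\<Union>m\<in>Poly_Mapping.keys c. Poly_Mapping.keys m) \<subseteq> {..<K}"
    using finite_nat_bounded[OF fin] by blast
  have "supp_in {..<K} c" unfolding supp_in_def using K by blast
  then show ?thesis ..
qed

lemma ident: "(\<And>v. ev v c = 0) \<Longrightarrow> c = 0"
  using supp_in_bound[of c] ident_K by blast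


section \<open>The ideal of relations\<close>

definition rel :: "nat \<Rightarrow> nat \<Rightarrow> mpoly" where
  "rel n i = Y n i ^ 2 - (1 - X i ^ 2)"

definition inI :: "nat \<Rightarrow> mpoly \<Rightarrow> bool" where
  "inI n q \<longleftrightarrow> (\<exists>c. q = (\<Sum>i\<in>{1..n-1}. c i * rel n i))"

lemma cong_iff: "cong_y n a b \<longleftrightarrow> inI n (a - b)"
  by (simp add: cong_y_def inI_def rel_def)

lemma inI_0: "inI n 0"
  unfolding inI_def by (rule exI[of _ "\<lambda>_. 0"]) simp

lemma inI_add: "inI n a \<Longrightarrow> inI n b \<Longrightarrow> inI n (a + b)"
proof -
  assume "inI n a" "inI n b"
  then obtain c1 c2 where "a = (\<Sum>i\<in>{1..n-1}. c1 i * rel n i)" "b = (\<Sum>i\<in>{1..n-1}. c2 i * rel n i)"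
    unfolding inI_def by blast
  then have "a + b = (\<Sum>i\<in>{1..n-1}. (c1 i + c2 i) * rel n i)"
    by (simp add: sum.distrib distrib_right)
  then show ?thesis unfolding inI_def by (rule exI[of _ "\<lambda>i. c1 i + c2 i"])
qed

lemma inI_mult: "inI n a \<Longrightarrow> inI n (r * a)"
proof -
  assume "inI n a"
  then obtain c where "a = (\<Sum>i\<in>{1..n-1}. c i * rel n i)" unfolding inI_def by blast
  then have "r * a = (\<Sum>i\<in>{1..n-1}. (r * c i) * rel n i)"
    by (simp add: sum_distrib_left mult.assoc)
  then show ?thesis unfolding inI_def by (rule exI[of _ "\<lambda>i. r * c i"])
qed

lemma inI_uminus: "inI n a \<Longrightarrow> inI n (- a)"
  using inI_mult[of n a "-1"] by simp

lemma inI_rel: "i \<in> {1..n-1} \<Longrightarrow> inI n (rel n i)"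
proof -
  assume i: "i \<in> {1..n-1}"
  have "(\<Sum>j\<in>{1..n-1}. (if j = i then 1 else 0) * rel n j) = (\<Sum>j\<in>{1..n-1}. if j = i then rel n j else 0)"
    by (rule sum.cong) auto
  also have "\<dots> = rel n i" using i by (simp add: sum.delta)
  finally show ?thesis unfolding inI_def by (intro exI[of _ "\<lambda>j. if j = i then 1 else 0"]) simp
qed

lemma cong_refl: "cong_y n a a"
  by (simp add: cong_iff inI_0)

lemma cong_sym: "cong_y n a b \<Longrightarrow> cong_y n b a"
  using inI_uminus by (fastforce simp: cong_iff)

lemma cong_trans: "cong_y n a b \<Longrightarrow> cong_y n b c \<Longrightarrow> cong_y n a c"
  unfolding cong_iff using inI_add by fastforce

lemma cong_add: "cong_y n a b \<Longrightarrow> cong_y n c d \<Longrightarrow> cong_y n (a + c) (b + d)"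
proof -
  assume "cong_y n a b" "cong_y n c d"
  then have "inI n ((a - b) + (c - d))" unfolding cong_iff by (rule inI_add)
  then show ?thesis unfolding cong_iff by (simp add: algebra_simps)
qed

lemma cong_scale: "cong_y n a b \<Longrightarrow> cong_y n (r * a) (r * b)"
proof -
  assume "cong_y n a b"
  then have "inI n (r * (a - b))" unfolding cong_iff by (rule inI_mult)
  then show ?thesis unfolding cong_iff by (simp add: algebra_simps)
qed

lemma cong_mult: "cong_y n a b \<Longrightarrow> cong_y n c d \<Longrightarrow> cong_y n (a * c) (b * d)"
proof -
  assume ab: "cong_y n a b" and cd: "cong_y n c d"
  have "cong_y n (a * c) (a * d)" using cong_scale[OF cd] .
  moreover have "cong_y n (d * a) (d * b)" using cong_scale[OF ab] .
  ultimately show ?thesis by (metis cong_trans mult.commute)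
qed

lemma cong_power: "cong_y n a b \<Longrightarrow> cong_y n (a ^ k) (b ^ k)"
  by (induction k) (simp_all add: cong_refl cong_mult)

lemma cong_prod: "(\<And>x. x \<in> S \<Longrightarrow> cong_y n (f x) (g x)) \<Longrightarrow> cong_y n (prod f S) (prod g S)"
  by (induction S rule: infinite_finite_induct) (simp_all add: cong_refl cong_mult)

section \<open>Reduction of y-powers\<close>

definition dmo :: "nat \<Rightarrow> (nat \<Rightarrow>\<^sub>0 nat) \<Rightarrow> (nat \<Rightarrow>\<^sub>0 nat)" where
  "dmo n mo = (\<Sum>i\<in>{1..n-1}. Poly_Mapping.single (n+i) (2 * (Poly_Mapping.lookup mo (n+i) div 2)))"

lemma lookup_dmo:
  "Poly_Mapping.lookup (dmo n mo) k = (if n < k \<and> k < 2*n then 2 * (Poly_Mapping.lookup mo k div 2) else 0)"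
proof -
  have "Poly_Mapping.lookup (dmo n mo) k = (\<Sum>i\<in>{1..n-1}. (if i = k - n \<and> n < k then 2 * (Poly_Mapping.lookup mo k div 2) else 0))"
    unfolding dmo_def lookup_sum
    by (intro sum.cong refl) (auto simp: lookup_single when_def)
  also have "\<dots> = (if n < k \<and> k < 2*n then 2 * (Poly_Mapping.lookup mo k div 2) else 0)"
    by (cases "n < k") (auto simp: sum.delta)
  finally show ?thesis .
qed

definition mo' :: "nat \<Rightarrow> (nat \<Rightarrow>\<^sub>0 nat) \<Rightarrow> (nat \<Rightarrow>\<^sub>0 nat)" where
  "mo' n mo = mo - dmo n mo"

lemma lookup_mo': "Poly_Mapping.lookup (mo' n mo) k = (if n < k \<and> k < 2*n then Poly_Mapping.lookup mo k mod 2 else Poly_Mapping.lookup mo k)"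
  unfolding mo'_def lookup_minus lookup_dmo
  by (simp add: minus_mod_eq_mult_div[symmetric])

lemma mo'_dmo: "mo' n mo + dmo n mo = mo"
  by (rule poly_mapping_eqI)
     (simp add: lookup_add lookup_mo' lookup_dmo)

definition Zf :: "nat \<Rightarrow> (nat \<Rightarrow>\<^sub>0 nat) \<Rightarrow> mpoly" where
  "Zf n mo = (\<Prod>i\<in>{1..n-1}. (1 - X i ^ 2) ^ (Poly_Mapping.lookup mo (n+i) div 2))"

definition Rmon :: "nat \<Rightarrow> (nat \<Rightarrow>\<^sub>0 nat) \<Rightarrow> mpoly" where
  "Rmon n mo = Poly_Mapping.single (mo' n mo) 1 * Zf n mo"

definition R :: "nat \<Rightarrow> mpoly \<Rightarrow> mpoly" where
  "R n = lext (Poly_Mapping.single 0) (Rmon n)"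

lemma R_add: "R n (p + q) = R n p + R n q"
  unfolding R_def by (rule lext_add) (simp_all add: single_add)

lemma R_single: "R n (Poly_Mapping.single mo c) = Poly_Mapping.single 0 c * Rmon n mo"
  unfolding R_def by (rule lext_single) simp

lemma R_0: "R n 0 = 0"
  unfolding R_def by (rule lext_zero)

lemma Y_pow: "(Y n i ^ 2) ^ k = Poly_Mapping.single (Poly_Mapping.single (n+i) (2*k)) 1"
  unfolding Y_def var_def power_mult[symmetric] by (rule single_pow)

lemma single_dmo: "Poly_Mapping.single (dmo n mo) (1::rat) = (\<Prod>i\<in>{1..n-1}. (Y n i ^ 2) ^ (Poly_Mapping.lookup mo (n+i) div 2))"
  unfolding Y_pow dmo_def by (simp add: single_prod)

lemma cong_Rmon: "cong_y n (Poly_Mapping.single mo 1) (Rmon n mo)"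
proof -
  have "Poly_Mapping.single mo (1::rat) = Poly_Mapping.single (mo' n mo) 1 * Poly_Mapping.single (dmo n mo) 1"
    by (simp add: mult_single mo'_dmo)
  also have "\<dots> = Poly_Mapping.single (mo' n mo) 1 * (\<Prod>i\<in>{1..n-1}. (Y n i ^ 2) ^ (Poly_Mapping.lookup mo (n+i) div 2))"
    by (simp add: single_dmo)
  finally have e: "Poly_Mapping.single mo (1::rat) = \<dots>" .
  have "cong_y n (\<Prod>i\<in>{1..n-1}. (Y n i ^ 2) ^ (Poly_Mapping.lookup mo (n+i) div 2)) (Zf n mo)"
    unfolding Zf_def
  proof (intro cong_prod cong_power)
    fix i assume "i \<in> {1..n-1}"
    then show "cong_y n (Y n i ^ 2) (1 - X i ^ 2)"
      using inI_rel[of i n] by (simp add: cong_iff rel_def)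
  qed
  then show ?thesis unfolding e Rmon_def by (intro cong_mult cong_refl)
qed

lemma cong_R: "cong_y n q (R n q)"
proof (induction q rule: lin_induct)
  case 1 then show ?case by (simp add: R_0 cong_refl)
next
  case (2 k c)
  have e: "Poly_Mapping.single k c = Poly_Mapping.single 0 c * Poly_Mapping.single k 1"
    by (simp add: mult_single)
  have "cong_y n (Poly_Mapping.single 0 c * Poly_Mapping.single k 1) (Poly_Mapping.single 0 c * Rmon n k)"
    by (rule cong_scale[OF cong_Rmon])
  then show ?case by (simp only: R_single flip: e)
next
  case (3 p q) then show ?case by (simp add: R_add cong_add)
qed


definition good :: "nat \<Rightarrow> mpoly \<Rightarrow> bool" where
  "good n q \<longleftrightarrow> (\<forall>mo\<in>Poly_Mapping.keys q. Poly_Mapping.keys mo \<subseteq> {1..2*n-1} \<and>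
      (\<forall>i\<in>{1..n-1}. Poly_Mapping.lookup mo (n+i) \<le> 1))"

lemma good_0: "good n 0" by (simp add: good_def)

lemma good_add: "good n a \<Longrightarrow> good n b \<Longrightarrow> good n (a + b)"
  using keys_add[of a b] unfolding good_def by blast

lemma good_scale: "good n a \<Longrightarrow> good n (Poly_Mapping.single 0 c * a)"
proof -
  assume g: "good n a"
  have "Poly_Mapping.keys (Poly_Mapping.single 0 c * a) \<subseteq> Poly_Mapping.keys a"
  proof
    fix k assume "k \<in> Poly_Mapping.keys (Poly_Mapping.single 0 c * a)"
    then obtain x y where "k = x + y" "x \<in> Poly_Mapping.keys (Poly_Mapping.single 0 c)" "y \<in> Poly_Mapping.keys a"
      using keys_mult by blast
    then show "k \<in> Poly_Mapping.keys a" by (auto split: if_splits)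
  qed
  then show ?thesis using g unfolding good_def by blast
qed

lemma supp_Zf: "supp_in {1..n-1} (Zf n mo)"
  unfolding Zf_def X_def
  by (intro supp_in_prod supp_in_power supp_in_diff supp_in_1 supp_in_var) auto

lemma good_Rmon:
  assumes "Poly_Mapping.keys mo \<subseteq> {1..2*n-1}"
  shows "good n (Rmon n mo)"
  unfolding good_def Rmon_def
proof
  fix k assume "k \<in> Poly_Mapping.keys (Poly_Mapping.single (mo' n mo) 1 * Zf n mo)"
  then obtain x z where k: "k = x + z" and x: "x \<in> Poly_Mapping.keys (Poly_Mapping.single (mo' n mo) (1::rat))"
    and z: "z \<in> Poly_Mapping.keys (Zf n mo)"
    using keys_mult by blast
  have xe: "x = mo' n mo" using x by (simp split: if_splits)
  have zk: "Poly_Mapping.keys z \<subseteq> {1..n-1}" using supp_Zf[of n mo] z unfolding supp_in_def by blast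
  have k1: "Poly_Mapping.keys (mo' n mo) \<subseteq> Poly_Mapping.keys mo"
  proof
    fix j assume "j \<in> Poly_Mapping.keys (mo' n mo)"
    then have "Poly_Mapping.lookup (mo' n mo) j \<noteq> 0" by (simp add: in_keys_iff)
    then have "Poly_Mapping.lookup mo j \<noteq> 0" by (auto simp: lookup_mo' split: if_splits)
    then show "j \<in> Poly_Mapping.keys mo" by (simp add: in_keys_iff)
  qed
  have sub: "{1..n-1} \<subseteq> {1..2*n-1}" by auto
  have "Poly_Mapping.keys k \<subseteq> {1..2*n-1}"
    using keys_add[of x z] k xe k1 zk assms sub by blast
  moreover have "\<forall>i\<in>{1..n-1}. Poly_Mapping.lookup k (n+i) \<le> 1"
  proof
    fix i assume i: "i \<in> {1..n-1}"
    then have "n + i \<notin> Poly_Mapping.keys z" using zk by auto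
    then have "Poly_Mapping.lookup z (n+i) = 0" by (simp add: in_keys_iff)
    moreover have "n < n + i \<and> n + i < 2 * n" using i by auto
    ultimately show "Poly_Mapping.lookup k (n+i) \<le> 1"
      by (simp add: k xe lookup_add lookup_mo')
  qed
  ultimately show "Poly_Mapping.keys k \<subseteq> {1..2*n-1} \<and> (\<forall>i\<in>{1..n-1}. Poly_Mapping.lookup k (n+i) \<le> 1)" ..
qed

lemma good_R: "supp_in {1..2*n-1} q \<Longrightarrow> good n (R n q)"
  unfolding R_def lext_def
proof (rule closed_sum[where Q="good n"])
  assume a: "supp_in {1..2*n-1} q"
  show "good n 0" by (rule good_0)
  show "good n (a + b)" if "good n a" "good n b" for a b using that by (rule good_add)
  fix x assume "x \<in> Poly_Mapping.keys q"
  then have "Poly_Mapping.keys x \<subseteq> {1..2*n-1}" using a unfolding supp_in_def by blast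
  then show "good n (Poly_Mapping.single 0 (Poly_Mapping.lookup q x) * Rmon n x)"
    by (intro good_scale good_Rmon)
qed

section \<open>Sign flips\<close>

definition fl :: "nat \<Rightarrow> nat \<Rightarrow> mpoly \<Rightarrow> mpoly" where
  "fl n i = ins (Poly_Mapping.single 0) (\<lambda>k. if k = n + i then - var k else var k)"

lemma crh_fl: "comm_ring_hom (fl n i)"
  unfolding fl_def by (rule ins_hom[OF single_rat_hom])

lemma mon_mult_fun: "mon (\<lambda>k. s k * g k) m = mon s m * mon g m"
  unfolding mon_def by (simp add: power_mult_distrib prod.distrib)

lemma mon_delta: "mon (\<lambda>k. if k = j then a else 1) m = a ^ Poly_Mapping.lookup m j"
proof -
  have "mon (\<lambda>k. if k = j then a else 1) m = (\<Prod>k\<in>insert j (Poly_Mapping.keys m). (if k = j then a else 1) ^ Poly_Mapping.lookup m k)"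
    by (rule mon_superset) auto
  also have "\<dots> = (\<Prod>k\<in>insert j (Poly_Mapping.keys m). if k = j then a ^ Poly_Mapping.lookup m j else 1)"
    by (rule prod.cong) auto
  also have "\<dots> = a ^ Poly_Mapping.lookup m j" by (simp add: prod.delta)
  finally show ?thesis .
qed

lemma fl_single: "fl n i (Poly_Mapping.single mo c) = Poly_Mapping.single mo (if even (Poly_Mapping.lookup mo (n+i)) then c else - c)"
proof -
  have f: "(\<lambda>k. if k = n + i then - var k else var k) = (\<lambda>k. (if k = n + i then -1 else 1) * (var k :: mpoly))"
    by auto
  have "fl n i (Poly_Mapping.single mo c) = Poly_Mapping.single 0 c * ((-1) ^ Poly_Mapping.lookup mo (n+i) * Poly_Mapping.single mo 1)"
    unfolding fl_def ins_single[OF single_rat_hom] f mon_mult_fun mon_delta mon_var ..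
  also have "\<dots> = Poly_Mapping.single mo (if even (Poly_Mapping.lookup mo (n+i)) then c else - c)"
    by (simp add: minus_one_power_iff mult_single single_uminus)
  finally show ?thesis .
qed

lemma lookup_fl: "Poly_Mapping.lookup (fl n i q) mo = (if even (Poly_Mapping.lookup mo (n+i)) then Poly_Mapping.lookup q mo else - Poly_Mapping.lookup q mo)"
proof (induction q rule: lin_induct)
  case 1
  interpret comm_ring_hom "fl n i" by (rule crh_fl)
  show ?case by simp
next
  case (2 k c) then show ?case by (simp add: fl_single lookup_single when_def)
next
  case (3 p q)
  interpret comm_ring_hom "fl n i" by (rule crh_fl)
  from 3 show ?case by (simp add: hom_add lookup_add)
qed

lemma fl_var: "fl n i (var k) = (if k = n + i then - var k else var k)"
  unfolding fl_def by (simp add: single_rat_hom)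

lemma fl_X: "k \<noteq> n + i \<Longrightarrow> fl n i (X k) = X k"
  by (simp add: X_def fl_var)

lemma fl_Y: "fl n i (Y n j) = (if j = i then - Y n j else Y n j)"
  by (simp add: Y_def fl_var)

lemma fl_rel: "k \<in> {1..n-1} \<Longrightarrow> fl n i (rel n k) = rel n k"
proof -
  assume k: "k \<in> {1..n-1}"
  interpret comm_ring_hom "fl n i" by (rule crh_fl)
  have "k \<noteq> n + i" using k by auto
  then show ?thesis by (simp add: rel_def hom_distribs fl_X fl_Y)
qed

lemma fl_inI: "inI n q \<Longrightarrow> inI n (fl n i q)"
proof -
  assume "inI n q"
  then obtain c where q: "q = (\<Sum>k\<in>{1..n-1}. c k * rel n k)" unfolding inI_def by blast
  interpret comm_ring_hom "fl n i" by (rule crh_fl)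
  have "fl n i q = (\<Sum>k\<in>{1..n-1}. fl n i (c k) * rel n k)"
    unfolding q hom_sum hom_mult by (intro sum.cong refl) (simp add: fl_rel)
  then show ?thesis unfolding inI_def by (rule exI[of _ "\<lambda>k. fl n i (c k)"])
qed

lemma cong_fl: "cong_y n a b \<Longrightarrow> cong_y n (fl n i a) (fl n i b)"
proof -
  assume "cong_y n a b"
  then have *: "inI n (fl n i (a - b))" unfolding cong_iff by (rule fl_inI)
  interpret comm_ring_hom "fl n i" by (rule crh_fl)
  from * show ?thesis unfolding cong_iff by (simp add: hom_distribs)
qed


lemma EC_hom:
  assumes g: "comm_ring_hom g" and gX: "\<And>j. j \<in> {1..m} \<Longrightarrow> g (X j) = X j"
  shows "g (EC ys m) = EC (\<lambda>j. g (ys j)) m"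
proof -
  interpret comm_ring_hom g by fact
  show ?thesis unfolding EC_def hom_sum hom_mult hom_power hom_uminus hom_one hom_prod
  proof (intro sum.cong refl arg_cong2[where f="(*)"] prod.cong)
    fix S j assume "S \<in> {S \<in> Pow {1..m}. even (card S)}" "j \<in> {1..m} - S"
    then show "g (X j) = X j" using gX by auto
  qed
qed

lemma EC_cong:
  assumes "\<And>j. j \<in> {1..m} \<Longrightarrow> ys j = ys' j"
  shows "EC ys m = EC ys' m"
  unfolding EC_def
proof (intro sum.cong refl arg_cong2[where f="(*)"] prod.cong)
  fix S j assume "S \<in> {S \<in> Pow {1..m}. even (card S)}" "j \<in> S"
  then show "ys j = ys' j" using assms by auto
qed

lemma prod_neg: "(\<Prod>j\<in>S. - f j) = (-1) ^ card S * prod f (S::'a set)" for f :: "'a \<Rightarrow> 'b::comm_ring_1"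
  by (induction S rule: infinite_finite_induct) (simp_all add: algebra_simps)

lemma EC_neg: "EC (\<lambda>j. - ys j) m = EC ys m"
  unfolding EC_def
proof (intro sum.cong refl)
  fix S assume S: "S \<in> {S \<in> Pow {1..m}. even (card S)}"
  then show "(- 1) ^ (card S div 2) * (\<Prod>j\<in>S. - ys j) * (\<Prod>j\<in>{1..m} - S. X j) =
             (- 1) ^ (card S div 2) * prod ys S * (\<Prod>j\<in>{1..m} - S. X j)"
    by (simp add: prod_neg)
qed

definition symd :: "nat set \<Rightarrow> nat \<Rightarrow> nat set" where
  "symd T i = (if i \<in> T then T - {i} else insert i T)"

lemma symd_symd: "symd (symd T i) i = T"
  by (auto simp: symd_def)

lemma symd_Pow: "T \<in> Pow J \<Longrightarrow> i \<in> J \<Longrightarrow> symd T i \<in> Pow J"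
  by (auto simp: symd_def)

lemma fl_sigma: "fl n i (sigma_y n T j) = sigma_y n (symd T i) j"
proof -
  interpret comm_ring_hom "fl n i" by (rule crh_fl)
  show ?thesis by (auto simp: sigma_y_def symd_def fl_Y hom_uminus)
qed

lemma fl_factor:
  assumes "i \<ge> 1"
  shows "fl n i (X n - EC ys (n-1)) = X n - EC (\<lambda>j. fl n i (ys j)) (n-1)"
proof -
  interpret comm_ring_hom "fl n i" by (rule crh_fl)
  have "fl n i (EC ys (n-1)) = EC (\<lambda>j. fl n i (ys j)) (n-1)"
    by (rule EC_hom[OF crh_fl]) (rule fl_X, use assms in auto)
  moreover have "fl n i (X n) = X n" by (rule fl_X) (use assms in auto)
  ultimately show ?thesis by (simp add: hom_minus)
qed

lemma flip_P:
  assumes i: "i \<in> {1..n-1}"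
  shows "fl n i (P_lift n) = P_lift n"
proof -
  interpret comm_ring_hom "fl n i" by (rule crh_fl)
  let ?J = "{2..n-1}"
  let ?F = "\<lambda>T. X n - EC (sigma_y n T) (n-1)"
  have "fl n i (P_lift n) = (\<Prod>T\<in>Pow ?J. X n - EC (\<lambda>j. fl n i (sigma_y n T j)) (n-1))"
    unfolding P_lift_def hom_prod using i by (intro prod.cong refl fl_factor) auto
  also have "\<dots> = (\<Prod>T\<in>Pow ?J. ?F T)"
  proof (cases "i = 1")
    case False
    then have iJ: "i \<in> ?J" using i by auto
    have "(\<Prod>T\<in>Pow ?J. X n - EC (\<lambda>j. fl n i (sigma_y n T j)) (n-1)) = (\<Prod>T\<in>Pow ?J. ?F (symd T i))"
      by (simp add: fl_sigma)
    also have "\<dots> = (\<Prod>T\<in>Pow ?J. ?F T)"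
      by (rule prod.reindex_bij_witness[where i="\<lambda>T. symd T i" and j="\<lambda>T. symd T i"])
         (use symd_Pow[OF _ iJ] in \<open>simp_all add: symd_symd\<close>)
    finally show ?thesis .
  next
    case True
    have e: "EC (\<lambda>j. fl n i (sigma_y n T j)) (n-1) = EC (sigma_y n (?J - T)) (n-1)" if T: "T \<in> Pow ?J" for T
    proof -
      have "EC (\<lambda>j. fl n i (sigma_y n T j)) (n-1) = EC (\<lambda>j. - sigma_y n (?J - T) j) (n-1)"
      proof (rule EC_cong)
        fix j assume j: "j \<in> {1..n-1}"
        show "fl n i (sigma_y n T j) = - sigma_y n (?J - T) j"
          unfolding fl_sigma using T j True by (auto simp: sigma_y_def symd_def)
      qed
      then show ?thesis by (simp add: EC_neg)
    qed
    have "(\<Prod>T\<in>Pow ?J. X n - EC (\<lambda>j. fl n i (sigma_y n T j)) (n-1)) = (\<Prod>T\<in>Pow ?J. ?F (?J - T))"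
      by (intro prod.cong refl arg_cong2[where f="(-)"] e)
    also have "\<dots> = (\<Prod>T\<in>Pow ?J. ?F T)"
      by (rule prod.reindex_bij_witness[where i="\<lambda>T. ?J - T" and j="\<lambda>T. ?J - T"]) auto
    finally show ?thesis .
  qed
  finally show ?thesis unfolding P_lift_def .
qed


lemma lookup_scale: "Poly_Mapping.lookup (Poly_Mapping.single 0 a * q) mo = a * Poly_Mapping.lookup q mo"
proof (induction q rule: lin_induct)
  case 1 then show ?case by simp
next
  case (2 k c) then show ?case by (simp add: mult_single lookup_single when_def)
next
  case (3 p q) then show ?case by (simp add: distrib_left lookup_add)
qed

definition step :: "nat \<Rightarrow> nat \<Rightarrow> mpoly \<Rightarrow> mpoly" where
  "step n i q = Poly_Mapping.single 0 (1/2) * (q + fl n i q)"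

lemma lookup_step: "Poly_Mapping.lookup (step n i q) mo = (if even (Poly_Mapping.lookup mo (n+i)) then Poly_Mapping.lookup q mo else 0)"
  by (simp add: step_def lookup_scale lookup_add lookup_fl)

lemma keys_step: "Poly_Mapping.keys (step n i q) \<subseteq> Poly_Mapping.keys q"
  by (auto simp: in_keys_iff lookup_step split: if_splits)

lemma half2: "Poly_Mapping.single 0 (1/2::rat) * Poly_Mapping.single 0 2 = (1::mpoly)"
proof -
  have "Poly_Mapping.single 0 (1/2::rat) * Poly_Mapping.single 0 2 = Poly_Mapping.single (0+0) (1/2*2)"
    by (rule mult_single)
  also have "\<dots> = Poly_Mapping.single 0 1" by simp
  finally show ?thesis by simp
qed

lemma half_double: "Poly_Mapping.single 0 (1/2) * (P + P) = (P::mpoly)"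
proof -
  have "Poly_Mapping.single 0 2 * P = 2 * P" by (simp only: single_numeral)
  then have "P + P = Poly_Mapping.single 0 2 * P" by (simp only: mult_2)
  then have "Poly_Mapping.single 0 (1/2) * (P + P) = (Poly_Mapping.single 0 (1/2::rat) * Poly_Mapping.single 0 2) * P"
    by (simp only: mult.assoc)
  then show ?thesis by (simp only: half2 mult_1)
qed

lemma cong_step:
  assumes "cong_y n P r" "fl n i P = P"
  shows "cong_y n P (step n i r)"
proof -
  have a: "inI n (P - r)" using assms(1) by (simp add: cong_iff)
  have "cong_y n (fl n i P) (fl n i r)" by (rule cong_fl[OF assms(1)])
  then have b: "inI n (P - fl n i r)" using assms(2) by (simp add: cong_iff)
  have "P - step n i r = Poly_Mapping.single 0 (1/2) * ((P - r) + (P - fl n i r))"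
  proof -
    have "(P - r) + (P - fl n i r) = (P + P) - (r + fl n i r)" by simp
    then have "Poly_Mapping.single 0 (1/2) * ((P - r) + (P - fl n i r)) =
          Poly_Mapping.single 0 (1/2) * (P + P) - Poly_Mapping.single 0 (1/2) * (r + fl n i r)"
      by (simp only: right_diff_distrib)
    then show ?thesis by (simp only: half_double step_def)
  qed
  moreover have "inI n (Poly_Mapping.single 0 (1/2) * ((P - r) + (P - fl n i r)))"
    by (intro inI_mult inI_add a b)
  ultimately show ?thesis by (simp add: cong_iff)
qed

fun avg :: "nat \<Rightarrow> nat \<Rightarrow> mpoly \<Rightarrow> mpoly" where
  "avg n 0 q = q"
| "avg n (Suc k) q = step n (Suc k) (avg n k q)"

lemma avg_props:
  assumes "k \<le> n - 1" "cong_y n P q" "\<And>i. i \<in> {1..n-1} \<Longrightarrow> fl n i P = P"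
  shows "cong_y n P (avg n k q) \<and> Poly_Mapping.keys (avg n k q) \<subseteq> Poly_Mapping.keys q \<and>
    (\<forall>mo\<in>Poly_Mapping.keys (avg n k q). \<forall>i\<in>{1..k}. even (Poly_Mapping.lookup mo (n+i)))"
  using assms(1)
proof (induction k)
  case 0 then show ?case using assms(2) by simp
next
  case (Suc k)
  then have IH: "cong_y n P (avg n k q)" "Poly_Mapping.keys (avg n k q) \<subseteq> Poly_Mapping.keys q"
    "\<forall>mo\<in>Poly_Mapping.keys (avg n k q). \<forall>i\<in>{1..k}. even (Poly_Mapping.lookup mo (n+i))" by auto
  have c: "cong_y n P (avg n (Suc k) q)"
    using cong_step[OF IH(1) assms(3)] Suc.prems by simp
  have ks: "Poly_Mapping.keys (avg n (Suc k) q) \<subseteq> Poly_Mapping.keys (avg n k q)"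
    using keys_step by simp
  have ev: "\<forall>mo\<in>Poly_Mapping.keys (avg n (Suc k) q). \<forall>i\<in>{1..Suc k}. even (Poly_Mapping.lookup mo (n+i))"
  proof (intro ballI)
    fix mo i assume mo: "mo \<in> Poly_Mapping.keys (avg n (Suc k) q)" and i: "i \<in> {1..Suc k}"
    then have l: "Poly_Mapping.lookup (step n (Suc k) (avg n k q)) mo \<noteq> 0" by (simp add: in_keys_iff)
    then have e1: "even (Poly_Mapping.lookup mo (n + Suc k))" by (simp add: lookup_step split: if_splits)
    have "mo \<in> Poly_Mapping.keys (avg n k q)" using mo ks by blast
    then show "even (Poly_Mapping.lookup mo (n+i))"
      using IH(3) i e1 by (cases "i = Suc k") auto
  qed
  show ?case using c ks IH(2) ev by blast
qed

lemma supp_P_lift: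
  assumes "n \<ge> 1"
  shows "supp_in {1..2*n-1} (P_lift n)"
  unfolding P_lift_def
proof (intro supp_in_prod supp_in_diff)
  show "supp_in {1..2*n-1} (X n)" unfolding X_def by (rule supp_in_var) (use assms in auto)
  fix T
  show "supp_in {1..2*n-1} (EC (sigma_y n T) (n-1))"
    unfolding EC_def
  proof (intro supp_in_sum supp_in_mult supp_in_prod supp_in_power supp_in_uminus supp_in_1)
    fix S j assume S: "S \<in> {S \<in> Pow {1..n-1}. even (card S)}"
    { assume "j \<in> S"
      then have j: "j \<in> {1..n-1}" using S by auto
      have v: "supp_in {1..2*n-1} (var (n+j))" by (rule supp_in_var) (use j in auto)
      show "supp_in {1..2*n-1} (sigma_y n T j)"
        using v by (simp add: sigma_y_def Y_def supp_in_uminus) }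
    { assume "j \<in> {1..n-1} - S"
      then show "supp_in {1..2*n-1} (X j)" unfolding X_def by (intro supp_in_var) auto }
  qed
qed

theorem exists_p:
  assumes "n \<ge> 2"
  shows "\<exists>p. in_Qx n p \<and> cong_y n (P_lift n) p"
proof -
  let ?P = "P_lift n"
  let ?q = "R n ?P"
  let ?p = "avg n (n-1) ?q"
  have g: "good n ?q" by (rule good_R[OF supp_P_lift]) (use assms in auto)
  have props: "cong_y n ?P ?p \<and> Poly_Mapping.keys ?p \<subseteq> Poly_Mapping.keys ?q \<and>
    (\<forall>mo\<in>Poly_Mapping.keys ?p. \<forall>i\<in>{1..n-1}. even (Poly_Mapping.lookup mo (n+i)))"
    by (rule avg_props) (simp_all add: cong_R flip_P)
  have "in_Qx n ?p"
    unfolding in_Qx_def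
  proof
    fix mo assume mo: "mo \<in> Poly_Mapping.keys ?p"
    then have moq: "mo \<in> Poly_Mapping.keys ?q" using props by blast
    have k: "Poly_Mapping.keys mo \<subseteq> {1..2*n-1}" and le: "\<forall>i\<in>{1..n-1}. Poly_Mapping.lookup mo (n+i) \<le> 1"
      using g moq unfolding good_def by auto
    have evn: "\<forall>i\<in>{1..n-1}. even (Poly_Mapping.lookup mo (n+i))" using props mo by blast
    show "Poly_Mapping.keys mo \<subseteq> {1..n}"
    proof
      fix j assume j: "j \<in> Poly_Mapping.keys mo"
      then have j1: "j \<in> {1..2*n-1}" using k by blast
      show "j \<in> {1..n}"
      proof (rule ccontr)
        assume "j \<notin> {1..n}"
        then have i: "j - n \<in> {1..n-1}" and jn: "j = n + (j - n)" using j1 by auto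
        have "Poly_Mapping.lookup mo (n + (j-n)) \<le> 1" "even (Poly_Mapping.lookup mo (n + (j-n)))"
          using le evn i by auto
        then have a: "Poly_Mapping.lookup mo j \<le> 1" "even (Poly_Mapping.lookup mo j)" using jn[symmetric] by simp_all
        have "x \<le> 1 \<Longrightarrow> even x \<Longrightarrow> x = 0" for x :: nat by presburger
        then have "Poly_Mapping.lookup mo j = 0" using a by blast
        then show False using j by (simp add: in_keys_iff)
      qed
    qed
  qed
  then show ?thesis using props by blast
qed


definition ECL :: "(nat \<Rightarrow> 'a::comm_ring_1) \<Rightarrow> (nat \<Rightarrow> 'a) \<Rightarrow> nat \<Rightarrow> 'a" where
  "ECL ys xs m = (\<Sum>S \<in> {S \<in> Pow {1..m}. even (card S)}.
      (-1) ^ (card S div 2) * prod ys S * (\<Prod>j\<in>{1..m} - S. xs j))"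

lemma EC_hom_gen:
  assumes g: "comm_ring_hom g"
  shows "g (EC ys m) = ECL (\<lambda>j. g (ys j)) (\<lambda>j. g (X j)) m"
proof -
  interpret comm_ring_hom g by fact
  show ?thesis unfolding EC_def ECL_def hom_sum hom_mult hom_power hom_uminus hom_one hom_prod ..
qed

lemma ECL_cong:
  assumes "\<And>j. j \<in> {1..m} \<Longrightarrow> ys j = ys' j" "\<And>j. j \<in> {1..m} \<Longrightarrow> xs j = xs' j"
  shows "ECL ys xs m = ECL ys' xs' m"
  unfolding ECL_def
proof (intro sum.cong refl arg_cong2[where f="(*)"] prod.cong)
  fix S j assume "S \<in> {S \<in> Pow {1..m}. even (card S)}" "j \<in> S"
  then show "ys j = ys' j" using assms by auto
next
  fix S j assume "S \<in> {S \<in> Pow {1..m}. even (card S)}" "j \<in> {1..m} - S"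
  then show "xs j = xs' j" using assms by auto
qed

lemma prod_lin:
  fixes a b :: "nat \<Rightarrow> 'a::comm_ring_1"
  shows "(\<Prod>j\<in>{1..m}. c * b j + a j) = (\<Sum>S\<in>Pow {1..m}. c ^ card S * prod b S * (\<Prod>j\<in>{1..m} - S. a j))"
proof -
  have "(\<Prod>j\<in>{1..m}. c * b j + a j) = (\<Sum>S\<in>Pow {1..m}. (\<Prod>j\<in>S. c * b j) * (\<Prod>j\<in>{1..m} - S. a j))"
    by (rule prod_add) simp
  also have "\<dots> = (\<Sum>S\<in>Pow {1..m}. c ^ card S * prod b S * (\<Prod>j\<in>{1..m} - S. a j))"
    by (intro sum.cong refl) (simp add: prod.distrib)
  finally show ?thesis .
qed

lemma KI_gen:
  fixes a b u v :: "nat \<Rightarrow> 'a::comm_ring_1"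
  assumes io: "io * io = -1" and hf: "hf * 2 = 1"
    and u: "\<And>j. j \<in> {1..m} \<Longrightarrow> io * b j + a j = u j"
    and v: "\<And>j. j \<in> {1..m} \<Longrightarrow> (- io) * b j + a j = v j"
  shows "ECL b a m = hf * ((\<Prod>j\<in>{1..m}. u j) + (\<Prod>j\<in>{1..m}. v j))"
proof -
  let ?t = "\<lambda>S. prod b S * (\<Prod>j\<in>{1..m} - S. a j)"
  have pu: "(\<Prod>j\<in>{1..m}. u j) = (\<Sum>S\<in>Pow {1..m}. io ^ card S * ?t S)"
    using prod_lin[of io b a m] u by (simp add: mult.assoc)
  have pv: "(\<Prod>j\<in>{1..m}. v j) = (\<Sum>S\<in>Pow {1..m}. (- io) ^ card S * ?t S)"
    using prod_lin[of "- io" b a m] v by (simp add: mult.assoc)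
  have key: "io ^ k + (- io) ^ k = (if even k then 2 * (-1) ^ (k div 2) else 0)" for k
  proof (cases "even k")
    case True
    then obtain l where k: "k = 2 * l" by blast
    have "io ^ k = (-1) ^ l" unfolding k power_mult by (simp add: power2_eq_square io)
    moreover have "(- io) ^ k = (-1) ^ l" unfolding k power_mult by (simp add: power2_eq_square io)
    ultimately show ?thesis using True k by simp
  next
    case False
    then have "(- io) ^ k = - (io ^ k)" by (simp add: power_minus_odd)
    then show ?thesis using False by simp
  qed
  have "(\<Prod>j\<in>{1..m}. u j) + (\<Prod>j\<in>{1..m}. v j) = (\<Sum>S\<in>Pow {1..m}. (io ^ card S + (- io) ^ card S) * ?t S)"
    unfolding pu pv by (simp add: sum.distrib distrib_right)
  also have "\<dots> = (\<Sum>S\<in>Pow {1..m}. if even (card S) then 2 * ((-1) ^ (card S div 2) * ?t S) else 0)"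
    by (intro sum.cong refl) (simp add: key mult.assoc)
  also have "\<dots> = (\<Sum>S\<in>{S\<in>Pow {1..m}. even (card S)}. 2 * ((-1) ^ (card S div 2) * ?t S))"
    by (rule sum.inter_filter[symmetric]) simp
  also have "\<dots> = 2 * ECL b a m"
    unfolding ECL_def sum_distrib_left by (simp add: mult.assoc)
  finally have "(\<Prod>j\<in>{1..m}. u j) + (\<Prod>j\<in>{1..m}. v j) = 2 * ECL b a m" .
  then have "hf * ((\<Prod>j\<in>{1..m}. u j) + (\<Prod>j\<in>{1..m}. v j)) = (hf * 2) * ECL b a m"
    by (simp add: mult.assoc)
  then show ?thesis using hf by simp
qed


type_synonym lpoly = "(nat \<Rightarrow>\<^sub>0 int) \<Rightarrow>\<^sub>0 complex"

definition cL :: "complex \<Rightarrow> lpoly" where "cL c = Poly_Mapping.single 0 c"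

lemma crh_cL: "comm_ring_hom cL"
  unfolding cL_def by unfold_locales (simp_all add: single_add mult_single)

lemma cL_mult: "cL a * cL b = cL (a * b)"
  by (simp add: cL_def mult_single)

lemma cL_1: "cL 1 = 1" by (simp add: cL_def)
lemma cL_uminus: "cL (- a) = - cL a" by (simp add: cL_def single_uminus)
lemma cL_2: "cL 2 = 2" by (simp add: cL_def)

definition hL :: "rat \<Rightarrow> lpoly" where "hL = cL \<circ> of_rat"

lemma crh_hL: "comm_ring_hom hL"
  unfolding hL_def by (rule crh_comp[OF crh_of_rat crh_cL])

definition lmono :: "(nat \<Rightarrow>\<^sub>0 int) \<Rightarrow> lpoly" where "lmono e = Poly_Mapping.single e 1"

lemma mono_add: "lmono (a + b) = lmono a * lmono b"
  by (simp add: lmono_def mult_single)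

lemma mono_prod: "finite S \<Longrightarrow> (\<Prod>j\<in>S. lmono (g j)) = lmono (\<Sum>j\<in>S. g j)"
  unfolding lmono_def by (rule single_prod)

definition w :: "nat \<Rightarrow> lpoly" where "w j = lmono (Poly_Mapping.single j 1)"
definition wi :: "nat \<Rightarrow> lpoly" where "wi j = lmono (Poly_Mapping.single j (-1))"

lemma w_wi: "w j * wi j = 1"
proof -
  have "w j * wi j = lmono (Poly_Mapping.single j 1 + Poly_Mapping.single j (-1))"
    by (simp add: w_def wi_def mono_add)
  also have "\<dots> = lmono 0" by (simp flip: single_add)
  finally show ?thesis by (simp add: lmono_def)
qed

definition hf :: lpoly where "hf = cL (1/2)"
definition io :: lpoly where "io = cL \<i>"

lemma hf2: "hf * 2 = 1"
proof -
  have "hf * 2 = cL (1/2) * cL 2" by (simp add: hf_def cL_2)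
  also have "\<dots> = 1" by (simp add: cL_mult cL_1)
  finally show ?thesis .
qed

lemma io2: "io * io = -1"
proof -
  have "io * io = cL (\<i> * \<i>)" by (simp add: io_def cL_mult)
  also have "\<dots> = - 1" by (simp add: cL_uminus cL_1)
  finally show ?thesis .
qed

lemma alg1: "(i::'a::comm_ring_1) * i = -1 \<Longrightarrow> h * 2 = 1 \<Longrightarrow> i * (-(i*h)*(a - b)) + h*(a+b) = a"
proof -
  assume i: "i * i = -1" and h: "h * 2 = 1"
  have "i * (-(i*h)*(a - b)) + h*(a+b) - a = - (i * i + 1) * (h * (a - b)) + (h * 2 - 1) * a"
    by (simp add: algebra_simps)
  also have "\<dots> = 0" using i h by simp
  finally show ?thesis by simp
qed

lemma alg2: "(i::'a::comm_ring_1) * i = -1 \<Longrightarrow> h * 2 = 1 \<Longrightarrow> (-i) * (-(i*h)*(a - b)) + h*(a+b) = b"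
proof -
  assume i: "i * i = -1" and h: "h * 2 = 1"
  have "(-i) * (-(i*h)*(a - b)) + h*(a+b) - b = (i * i + 1) * (h * (a - b)) + (h * 2 - 1) * b"
    by (simp add: algebra_simps)
  also have "\<dots> = 0" using i h by simp
  finally show ?thesis by simp
qed

lemma alg3: "(i::'a::comm_ring_1) * i = -1 \<Longrightarrow> h * 2 = 1 \<Longrightarrow> a * b = 1 \<Longrightarrow> (- (i * h) * (a - b)) ^ 2 = 1 - (h * (a + b)) ^ 2"
proof -
  assume i: "i * i = -1" and h: "h * 2 = 1" and ab: "a * b = 1"
  have "(- (i * h) * (a - b)) ^ 2 - (1 - (h * (a + b)) ^ 2) =
        (i * i + 1) * (h * h * ((a - b) * (a - b))) + (a * b - 1) * (4 * (h * h)) + (h * 2 - 1) * (h * 2 + 1)"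
    by (simp add: algebra_simps power2_eq_square)
  also have "\<dots> = 0" using i h ab by simp
  finally show ?thesis by simp
qed

definition XL :: "nat \<Rightarrow> lpoly" where "XL j = hf * (w j + wi j)"
definition YL :: "nat \<Rightarrow> lpoly" where "YL j = - (io * hf) * (w j - wi j)"

lemma XY_u: "io * YL j + XL j = w j"
proof -
  show ?thesis unfolding XL_def YL_def by (rule alg1[OF io2 hf2])
qed

lemma XY_v: "(- io) * YL j + XL j = wi j"
proof -
  show ?thesis unfolding XL_def YL_def by (rule alg2[OF io2 hf2])
qed

lemma XY_rel: "YL j ^ 2 = 1 - XL j ^ 2"
proof -
  show ?thesis unfolding XL_def YL_def by (rule alg3[OF io2 hf2 w_wi])
qed

definition sg :: "nat set \<Rightarrow> nat \<Rightarrow> int" where "sg T j = (if j \<in> T then -1 else 1)"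
definition sgL :: "nat set \<Rightarrow> nat \<Rightarrow> lpoly" where "sgL T j = (if j \<in> T then -1 else 1)"

definition eT :: "nat \<Rightarrow> nat set \<Rightarrow> (nat \<Rightarrow>\<^sub>0 int)" where
  "eT n T = (\<Sum>j\<in>{1..n-1}. Poly_Mapping.single j (sg T j))"

definition E :: "nat \<Rightarrow> nat set \<Rightarrow> lpoly" where
  "E n T = hf * (lmono (eT n T) + lmono (- eT n T))"

lemma KI: "ECL (\<lambda>j. sgL T j * YL j) XL (n-1) = E n T"
proof -
  have u: "io * (sgL T j * YL j) + XL j = lmono (Poly_Mapping.single j (sg T j))" for j
  proof (cases "j \<in> T")
    case True
    then have e: "io * (sgL T j * YL j) = (- io) * YL j" by (simp add: sgL_def)
    have "lmono (Poly_Mapping.single j (sg T j)) = wi j" using True by (simp add: sg_def wi_def)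
    then show ?thesis by (simp only: e XY_v)
  next
    case False
    then have e: "io * (sgL T j * YL j) = io * YL j" by (simp add: sgL_def)
    have "lmono (Poly_Mapping.single j (sg T j)) = w j" using False by (simp add: sg_def w_def)
    then show ?thesis by (simp only: e XY_u)
  qed
  have v: "(- io) * (sgL T j * YL j) + XL j = lmono (Poly_Mapping.single j (- sg T j))" for j
  proof (cases "j \<in> T")
    case True
    then have e: "(- io) * (sgL T j * YL j) = io * YL j" by (simp add: sgL_def)
    have "lmono (Poly_Mapping.single j (- sg T j)) = w j" using True by (simp add: sg_def w_def)
    then show ?thesis by (simp only: e XY_u)
  next
    case False
    then have e: "(- io) * (sgL T j * YL j) = (- io) * YL j" by (simp add: sgL_def)
    have "lmono (Poly_Mapping.single j (- sg T j)) = wi j" using False by (simp add: sg_def wi_def)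
    then show ?thesis by (simp only: e XY_v)
  qed
  have "ECL (\<lambda>j. sgL T j * YL j) XL (n-1) =
      hf * ((\<Prod>j\<in>{1..n-1}. lmono (Poly_Mapping.single j (sg T j))) + (\<Prod>j\<in>{1..n-1}. lmono (Poly_Mapping.single j (- sg T j))))"
    by (rule KI_gen[OF io2 hf2 u v])
  also have "\<dots> = E n T"
    unfolding E_def eT_def by (simp add: mono_prod single_uminus sum_negf)
  finally show ?thesis .
qed


section \<open>The sign-flip automorphism of Laurent polynomials\<close>

definition flipE :: "nat set \<Rightarrow> (nat \<Rightarrow>\<^sub>0 int) \<Rightarrow> (nat \<Rightarrow>\<^sub>0 int)" where
  "flipE T e = Poly_Mapping.mapp (\<lambda>j x. if j \<in> T then - x else x) e"

lemma lookup_flipE: "Poly_Mapping.lookup (flipE T e) j = (if j \<in> T then - Poly_Mapping.lookup e j else Poly_Mapping.lookup e j)"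
  by (auto simp: flipE_def lookup_mapp when_def in_keys_iff)

lemma flipE_add: "flipE T (a + b) = flipE T a + flipE T b"
  by (rule poly_mapping_eqI) (simp add: lookup_flipE lookup_add)

lemma flipE_uminus: "flipE T (- a) = - flipE T a"
  by (rule poly_mapping_eqI) (simp add: lookup_flipE)

lemma flipE_flipE: "flipE T (flipE T e) = e"
  by (rule poly_mapping_eqI) (simp add: lookup_flipE)

lemma flipE_0: "flipE T 0 = 0"
  by (rule poly_mapping_eqI) (simp add: lookup_flipE)

lemma inj_flipE: "inj (flipE T)"
  by (metis flipE_flipE injI)

definition sig :: "nat set \<Rightarrow> lpoly \<Rightarrow> lpoly" where
  "sig T = Poly_Mapping.map_key (flipE T)"

lemma sig_single: "sig T (Poly_Mapping.single e c) = Poly_Mapping.single (flipE T e) c"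
proof -
  have "sig T (Poly_Mapping.single (flipE T (flipE T e)) c) = Poly_Mapping.single (flipE T e) c"
    unfolding sig_def by (rule map_key_single[OF inj_flipE])
  then show ?thesis by (simp add: flipE_flipE)
qed

lemma sig_add: "sig T (p + q) = sig T p + sig T q"
  unfolding sig_def by (rule map_key_plus[OF inj_flipE])

lemma sig_0: "sig T 0 = 0"
  unfolding sig_def by (rule map_key_zero[OF inj_flipE])

lemma sig_mult: "sig T (p * q) = sig T p * sig T q"
proof (induction p rule: lin_induct)
  case 1 then show ?case by (simp add: sig_0)
next
  case (2 k c)
  show ?case
  proof (induction q rule: lin_induct)
    case 1 then show ?case by (simp add: sig_0)
  next
    case (2 l d) then show ?case by (simp add: mult_single sig_single flipE_add)
  next
    case (3 q1 q2) then show ?case by (simp add: distrib_left sig_add)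
  qed
next
  case (3 p1 p2) then show ?case by (simp add: distrib_right sig_add)
qed

lemma crh_sig: "comm_ring_hom (sig T)"
proof
  show "sig T 0 = 0" by (rule sig_0)
  show "sig T 1 = 1" using sig_single[of T 0 1] by (simp add: flipE_0)
  show "sig T (p + q) = sig T p + sig T q" for p q by (rule sig_add)
  show "sig T (p * q) = sig T p * sig T q" for p q by (rule sig_mult)
qed

lemma sig_cL: "sig T (cL c) = cL c"
  by (simp add: cL_def sig_single flipE_0)

lemma sig_mono: "sig T (lmono e) = lmono (flipE T e)"
  by (simp add: lmono_def sig_single)

lemma flipE_single: "flipE T (Poly_Mapping.single j k) = Poly_Mapping.single j (if j \<in> T then - k else k)"
  by (rule poly_mapping_eqI) (simp add: lookup_flipE lookup_single when_def)

lemma sig_w: "sig T (w j) = (if j \<in> T then wi j else w j)"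
  by (simp add: w_def wi_def sig_mono flipE_single)

lemma sig_wi: "sig T (wi j) = (if j \<in> T then w j else wi j)"
  by (simp add: w_def wi_def sig_mono flipE_single)

lemma sig_XL: "sig T (XL j) = XL j"
proof -
  interpret comm_ring_hom "sig T" by (rule crh_sig)
  show ?thesis by (simp add: XL_def hf_def hom_mult hom_add sig_cL sig_w sig_wi add.commute)
qed

lemma sig_YL: "sig T (YL j) = sgL T j * YL j"
proof -
  interpret comm_ring_hom "sig T" by (rule crh_sig)
  have "sig T (YL j) = - (io * hf) * (sig T (w j) - sig T (wi j))"
    by (simp only: YL_def hf_def io_def hom_mult hom_uminus hom_minus sig_cL)
  then show ?thesis by (cases "j \<in> T") (simp_all add: sig_w sig_wi sgL_def YL_def algebra_simps)
qed

lemma flipE_sum: "flipE T (sum g S) = (\<Sum>j\<in>S. flipE T (g j))"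
  by (induction S rule: infinite_finite_induct) (simp_all add: flipE_0 flipE_add)

lemma flipE_eT: "flipE T (eT n {}) = eT n T"
  unfolding eT_def flipE_sum by (intro sum.cong refl) (simp add: flipE_single sg_def)

lemma sig_E: "sig T (E n {}) = E n T"
proof -
  interpret comm_ring_hom "sig T" by (rule crh_sig)
  show ?thesis by (simp add: E_def hf_def hom_mult hom_add sig_cL sig_mono flipE_uminus flipE_eT)
qed

lemma lookup_cL_mult: "Poly_Mapping.lookup (cL a * q) e = a * Poly_Mapping.lookup q e"
  unfolding cL_def by (rule lookup_scale)

lemma lookup_eT: "Poly_Mapping.lookup (eT n T) j = (if j \<in> {1..n-1} then sg T j else 0)"
  unfolding eT_def lookup_sum by (simp add: lookup_single when_def sum.delta)

lemma lookup_E: "Poly_Mapping.lookup (E n T) e =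
   1/2 * ((if eT n T = e then 1 else 0) + (if - eT n T = e then 1 else 0))"
  unfolding E_def hf_def lookup_cL_mult by (simp add: lmono_def lookup_add lookup_single when_def)

lemma inj_E:
  assumes n: "n \<ge> 2" and T: "T \<subseteq> {2..n-1}" and T': "T' \<subseteq> {2..n-1}" and eq: "E n T = E n T'"
  shows "T = T'"
proof -
  have l1: "Poly_Mapping.lookup (eT n S) 1 = 1" if "S \<subseteq> {2..n-1}" for S
    using that n by (auto simp: lookup_eT sg_def)
  have ne: "- eT n S \<noteq> eT n S'" if "S \<subseteq> {2..n-1}" "S' \<subseteq> {2..n-1}" for S S'
  proof
    assume "- eT n S = eT n S'"
    then have "Poly_Mapping.lookup (- eT n S) 1 = Poly_Mapping.lookup (eT n S') 1" by simp
    then show False using l1[OF that(1)] l1[OF that(2)] by simp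
  qed
  have "Poly_Mapping.lookup (E n T) (eT n T) = 1/2" using ne[OF T T] by (simp add: lookup_E)
  moreover have "Poly_Mapping.lookup (E n T') (eT n T) = 1/2 * (if eT n T' = eT n T then 1 else 0)"
    using ne[OF T' T] by (simp add: lookup_E)
  ultimately have e: "eT n T' = eT n T" using eq by (auto split: if_splits)
  have a: "j \<in> T'" if "j \<in> T" for j
  proof -
    have j: "j \<in> {1..n-1}" using T that by auto
    have "Poly_Mapping.lookup (eT n T') j = Poly_Mapping.lookup (eT n T) j" using e by simp
    then show "j \<in> T'" using j that by (auto simp: lookup_eT sg_def split: if_splits)
  qed
  have b: "j \<in> T" if "j \<in> T'" for j
  proof -
    have j: "j \<in> {1..n-1}" using T' that by auto
    have "Poly_Mapping.lookup (eT n T') j = Poly_Mapping.lookup (eT n T) j" using e by simp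
    then show "j \<in> T" using j that by (auto simp: lookup_eT sg_def split: if_splits)
  qed
  from a b show ?thesis by blast
qed


definition fphi :: "nat \<Rightarrow> nat set \<Rightarrow> nat \<Rightarrow> lpoly" where
  "fphi n T k = (if 1 \<le> k \<and> k \<le> n - 1 then XL k else if k = n then E n T else 0)"

definition fpsi :: "nat \<Rightarrow> nat set \<Rightarrow> nat \<Rightarrow> lpoly" where
  "fpsi n T k = (if 1 \<le> k \<and> k \<le> n - 1 then XL k else if k = n then E n T
     else if n < k \<and> k < 2*n then sgL T (k - n) * YL (k - n) else 0)"

definition phi :: "nat \<Rightarrow> nat set \<Rightarrow> mpoly \<Rightarrow> lpoly" where "phi n T = ins hL (fphi n T)"
definition psi :: "nat \<Rightarrow> nat set \<Rightarrow> mpoly \<Rightarrow> lpoly" where "psi n T = ins hL (fpsi n T)"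

lemma crh_phi: "comm_ring_hom (phi n T)" unfolding phi_def by (rule ins_hom[OF crh_hL])
lemma crh_psi: "comm_ring_hom (psi n T)" unfolding psi_def by (rule ins_hom[OF crh_hL])

lemma psi_X: "j \<in> {1..n-1} \<Longrightarrow> psi n T (X j) = XL j"
  by (simp add: psi_def X_def crh_hL fpsi_def)

lemma psi_Xn: "n \<ge> 1 \<Longrightarrow> psi n T (X n) = E n T"
proof -
  assume "n \<ge> 1"
  then have "\<not> (n \<le> n - 1)" by arith
  then show ?thesis by (simp add: psi_def X_def crh_hL fpsi_def)
qed

lemma psi_Y: "j \<in> {1..n-1} \<Longrightarrow> psi n T (Y n j) = sgL T j * YL j"
proof -
  assume j: "j \<in> {1..n-1}"
  then have a: "\<not> (n + j \<le> n - 1)" "n + j \<noteq> n" "n < n + j" "n + j < 2 * n" by auto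
  have "psi n T (Y n j) = fpsi n T (n + j)" by (simp add: psi_def Y_def crh_hL)
  also have "\<dots> = sgL T j * YL j" using a by (simp add: fpsi_def)
  finally show ?thesis .
qed

lemma psi_P:
  assumes n: "n \<ge> 2"
  shows "psi n T (P_lift n) = 0"
proof -
  interpret comm_ring_hom "psi n T" by (rule crh_psi)
  have "psi n T (EC (sigma_y n {}) (n-1)) = ECL (\<lambda>j. psi n T (sigma_y n {} j)) (\<lambda>j. psi n T (X j)) (n-1)"
    by (rule EC_hom_gen[OF crh_psi])
  also have "\<dots> = ECL (\<lambda>j. sgL T j * YL j) XL (n-1)"
    by (rule ECL_cong) (simp_all add: sigma_y_def psi_Y psi_X)
  also have "\<dots> = E n T" by (rule KI)
  finally have e: "psi n T (X n - EC (sigma_y n {}) (n-1)) = 0"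
    using n by (simp add: hom_minus psi_Xn)
  show ?thesis unfolding P_lift_def hom_prod
    by (rule prod_zero) (use e in auto)
qed

lemma psi_rel: "i \<in> {1..n-1} \<Longrightarrow> psi n T (rel n i) = 0"
proof -
  assume i: "i \<in> {1..n-1}"
  interpret comm_ring_hom "psi n T" by (rule crh_psi)
  have s: "(sgL T i * YL i) ^ 2 = YL i ^ 2" by (simp add: sgL_def power_mult_distrib)
  show ?thesis using i by (simp add: rel_def hom_minus hom_power psi_X psi_Y s XY_rel)
qed

lemma hom_cong:
  assumes g: "comm_ring_hom g" and rel0: "\<And>i. i \<in> {1..n-1} \<Longrightarrow> g (rel n i) = 0"
    and c: "cong_y n a b"
  shows "g a = g b"
proof -
  interpret comm_ring_hom g by fact
  obtain c where "a - b = (\<Sum>i\<in>{1..n-1}. c i * rel n i)" using c by (auto simp: cong_iff inI_def)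
  then have "g (a - b) = (\<Sum>i\<in>{1..n-1}. g (c i) * g (rel n i))" by (simp add: hom_sum hom_mult)
  also have "\<dots> = 0" by (simp add: rel0)
  finally show ?thesis by (simp add: hom_minus)
qed

lemma phi_psi: "in_Qx n q \<Longrightarrow> phi n T q = psi n T q"
  unfolding phi_def psi_def
proof (rule ins_cong)
  fix m i assume q: "in_Qx n q" and m: "m \<in> Poly_Mapping.keys q" and i: "i \<in> Poly_Mapping.keys m"
  then have "i \<in> {1..n}" unfolding in_Qx_def by blast
  then have "\<not> (n < i)" by auto
  then show "fphi n T i = fpsi n T i" by (simp add: fphi_def fpsi_def)
qed

lemma phi_const: "phi n T (Poly_Mapping.single 0 c) = hL c"
  unfolding phi_def by (rule ins_const[OF crh_hL])

lemma phi_var: "phi n T (var i) = fphi n T i"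
  unfolding phi_def by (rule ins_var[OF crh_hL])

lemma sig_phi: "sig T (phi n {} q) = phi n T q"
proof -
  have "sig T (phi n {} q) = ins (sig T \<circ> hL) (sig T \<circ> fphi n {}) q"
    unfolding phi_def by (rule ins_comp[OF crh_sig])
  also have "\<dots> = phi n T q"
    unfolding phi_def
    by (intro arg_cong2[where f="\<lambda>a b. ins a b q"])
       (auto simp: fun_eq_iff hL_def sig_cL fphi_def sig_XL sig_E sig_0)
  finally show ?thesis .
qed

lemma map_poly_X: "f 0 = 0 \<Longrightarrow> f 1 = 1 \<Longrightarrow> map_poly f [:0, 1:] = [:0, 1:]"
  by (intro poly_eqI) (simp add: coeff_map_poly coeff_pCons split: nat.splits)

lemma phi_tP: "phi n T q = poly (map_poly (phi n {}) (tP n q)) (E n T)"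
proof -
  interpret ph: comm_ring_hom "phi n {}" by (rule crh_phi)
  let ?g = "(\<lambda>P. poly P (E n T)) \<circ> map_poly (phi n {})"
  have g: "comm_ring_hom ?g" by (rule crh_comp[OF crh_map_poly[OF crh_phi] crh_poly])
  have "?g (tP n q) = ins (?g \<circ> hP) (?g \<circ> (\<lambda>i. if i = n then [:0,1:] else [:var i:])) q"
    unfolding tP_def by (rule ins_comp[OF g])
  also have "\<dots> = phi n T q"
  proof -
    have 1: "?g \<circ> hP = hL"
      by (auto simp: fun_eq_iff hP_def map_poly_const phi_const)
    have 2: "?g \<circ> (\<lambda>i. if i = n then [:0,1:] else [:var i:]) = fphi n T"
      by (auto simp: fun_eq_iff map_poly_const map_poly_X phi_var fphi_def)
    show ?thesis unfolding 1 2 by (simp add: phi_def)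
  qed
  finally show ?thesis by simp
qed


definition vv :: "nat \<Rightarrow> (nat \<Rightarrow> complex) \<Rightarrow> nat \<Rightarrow> complex" where
  "vv n v k = (if n < k \<and> k < 2*n then csqrt (1 - v (k - n) ^ 2) else v k)"

lemma ev_var: "ev u (var i) = u i"
  by (rule ins_var[OF crh_of_rat])

lemma ev_rel:
  assumes "i \<in> {1..n-1}" "u (n+i) ^ 2 = 1 - u i ^ 2"
  shows "ev u (rel n i) = 0"
proof -
  interpret comm_ring_hom "ev u" by (rule crh_ev)
  show ?thesis using assms by (simp add: rel_def X_def Y_def hom_minus hom_power ev_var)
qed

lemma ev_EC_indep:
  assumes "\<And>k. k \<noteq> n \<Longrightarrow> u k = u' k"
  shows "ev u (EC (sigma_y n T) (n-1)) = ev u' (EC (sigma_y n T) (n-1))"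
proof -
  interpret u: comm_ring_hom "ev u" by (rule crh_ev)
  interpret u': comm_ring_hom "ev u'" by (rule crh_ev)
  show ?thesis unfolding EC_hom_gen[OF crh_ev]
  proof (rule ECL_cong)
    fix j assume j: "j \<in> {1..n-1}"
    then have "n + j \<noteq> n" "j \<noteq> n" by auto
    then show "ev u (sigma_y n T j) = ev u' (sigma_y n T j)" "ev u (X j) = ev u' (X j)"
      using assms by (simp_all add: sigma_y_def Y_def X_def ev_var u.hom_uminus u'.hom_uminus)
  qed
qed

definition cT :: "nat \<Rightarrow> (nat \<Rightarrow> complex) \<Rightarrow> nat set \<Rightarrow> complex" where
  "cT n v T = ev (vv n v) (EC (sigma_y n T) (n-1))"

definition PiC :: "nat \<Rightarrow> (nat \<Rightarrow> complex) \<Rightarrow> complex poly" where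
  "PiC n v = (\<Prod>T\<in>Pow {2..n-1}. [:- cT n v T, 1:])"

lemma tP_p_map:
  assumes n: "n \<ge> 2" and q: "in_Qx n p" and c: "cong_y n (P_lift n) p"
  shows "map_poly (ev v) (tP n p) = PiC n v"
proof -
  have "poly (map_poly (ev v) (tP n p)) t = poly (PiC n v) t" for t
  proof -
    let ?u = "(vv n v)(n := t)"
    have "poly (map_poly (ev v) (tP n p)) t = ev (v(n := t)) p" by (rule ev_tP)
    also have "\<dots> = ev ?u p"
    proof (rule ins_cong)
      fix m i assume "m \<in> Poly_Mapping.keys p" "i \<in> Poly_Mapping.keys m"
      then have "i \<in> {1..n}" using q unfolding in_Qx_def by blast
      then show "(v(n := t)) i = ?u i" by (auto simp: vv_def)
    qed
    also have "\<dots> = ev ?u (P_lift n)"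
    proof (rule hom_cong[OF crh_ev _ c, symmetric])
      fix i assume i: "i \<in> {1..n-1}"
      then have "n + i \<noteq> n" "i \<noteq> n" "n < n + i" "n + i < 2 * n" by auto
      then have "?u (n+i) ^ 2 = 1 - ?u i ^ 2" by (simp add: vv_def)
      then show "ev ?u (rel n i) = 0" by (rule ev_rel[OF i])
    qed
    also have "\<dots> = (\<Prod>T\<in>Pow {2..n-1}. t - cT n v T)"
    proof -
      interpret comm_ring_hom "ev ?u" by (rule crh_ev)
      have "ev ?u (X n) = t" by (simp add: X_def ev_var)
      moreover have "ev ?u (EC (sigma_y n T) (n-1)) = cT n v T" for T
        unfolding cT_def by (rule ev_EC_indep) simp
      ultimately show ?thesis unfolding P_lift_def hom_prod hom_minus by simp
    qed
    also have "\<dots> = poly (PiC n v) t"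
      unfolding PiC_def poly_prod by simp
    finally show ?thesis .
  qed
  then show ?thesis using poly_eq_poly_eq_iff by blast
qed

lemma PiC_deg: "degree (PiC n v) = card (Pow {2..n-1})" and PiC_lead: "lead_coeff (PiC n v) = 1"
proof -
  show "degree (PiC n v) = card (Pow {2..n-1})"
    unfolding PiC_def by (subst degree_prod_sum_eq) auto
  show "lead_coeff (PiC n v) = 1"
    unfolding PiC_def lead_coeff_prod by simp
qed

lemma tP_p_struct:
  assumes n: "n \<ge> 2" and q: "in_Qx n p" and c: "cong_y n (P_lift n) p"
  shows "degree (tP n p) = card (Pow {2..n-1}) \<and> lead_coeff (tP n p) = 1"
proof -
  let ?N = "card (Pow {2..n-1})"
  have cm: "ev v (coeff (tP n p) k) = coeff (PiC n v) k" for v k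
  proof -
    have "coeff (map_poly (ev v) (tP n p)) k = ev v (coeff (tP n p) k)"
      by (rule coeff_map_poly) simp
    then show ?thesis using tP_p_map[OF n q c, of v] by simp
  qed
  have hi: "coeff (tP n p) k = 0" if "k > ?N" for k
  proof (rule ident)
    fix v show "ev v (coeff (tP n p) k) = 0"
      unfolding cm using that by (simp add: coeff_eq_0 PiC_deg)
  qed
  have top: "coeff (tP n p) ?N = 1"
  proof -
    have "coeff (tP n p) ?N - 1 = 0"
    proof (rule ident)
      fix v
      interpret comm_ring_hom "ev v" by (rule crh_ev)
      show "ev v (coeff (tP n p) ?N - 1) = 0"
        using PiC_lead[of n v] by (simp add: hom_minus cm PiC_deg)
    qed
    then show ?thesis by simp
  qed
  have d: "degree (tP n p) = ?N"
  proof (rule antisym)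
    show "degree (tP n p) \<le> ?N" by (rule degree_le) (use hi in auto)
    have "coeff (tP n p) ?N \<noteq> 0" unfolding top by simp
    then show "?N \<le> degree (tP n p)" by (rule le_degree)
  qed
  then show ?thesis using top by simp
qed


lemma root_bound:
  assumes n: "n \<ge> 2" and x0: "phi n {} x = 0" and u: "lead_coeff (tP n x) dvd 1"
  shows "card (Pow {2..n-1}) \<le> degree (tP n x)"
proof -
  let ?J = "{2..n-1}"
  let ?A = "map_poly (phi n {}) (tP n x)"
  interpret ph: comm_ring_hom "phi n {}" by (rule crh_phi)
  have roots: "poly ?A (E n T) = 0" if "T \<in> Pow ?J" for T
  proof -
    have "phi n T x = sig T (phi n {} x)" by (simp add: sig_phi)
    also have "\<dots> = 0" by (simp add: x0 sig_0)
    finally show ?thesis by (simp add: phi_tP)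
  qed
  obtain l where l: "lead_coeff (tP n x) * l = 1" using u by (auto elim: dvdE)
  then have "phi n {} (lead_coeff (tP n x)) * phi n {} l = 1"
    by (metis ph.hom_mult ph.hom_one)
  then have nz: "phi n {} (lead_coeff (tP n x)) \<noteq> 0" by auto
  have cA: "coeff ?A (degree (tP n x)) = phi n {} (lead_coeff (tP n x))"
    by (simp add: coeff_map_poly)
  have A0: "?A \<noteq> 0"
  proof
    assume "?A = 0"
    then have "coeff ?A (degree (tP n x)) = 0" by simp
    then show False using cA nz by simp
  qed
  have "card (Pow ?J) = card (E n ` Pow ?J)"
  proof (rule card_image[symmetric])
    show "inj_on (E n) (Pow ?J)"
      unfolding inj_on_def
    proof (intro ballI impI)
      fix T T' assume "T \<in> Pow ?J" "T' \<in> Pow ?J" "E n T = E n T'"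
      then show "T = T'" using inj_E[OF n, of T T'] by blast
    qed
  qed
  also have "\<dots> \<le> card {z. poly ?A z = 0}"
  proof (rule card_mono[OF poly_roots_finite[OF A0]])
    show "E n ` Pow ?J \<subseteq> {z. poly ?A z = 0}"
    proof
      fix z assume "z \<in> E n ` Pow ?J"
      then obtain T where "T \<in> Pow ?J" "z = E n T" by blast
      then show "z \<in> {z. poly ?A z = 0}" using roots by blast
    qed
  qed
  also have "\<dots> \<le> degree ?A" by (rule card_poly_roots_bound[OF A0])
  also have "\<dots> \<le> degree (tP n x)" by (rule degree_map_poly_le)
  finally show ?thesis .
qed

lemma deg0_unit:
  assumes d: "degree (tP n x) = 0" and u: "lead_coeff (tP n x) dvd 1"
  shows "x dvd 1"
proof -
  have "tP n x = [:coeff (tP n x) 0:]" using degree_0_id[OF d] by simp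
  then have "x = coeff (tP n x) 0" using fromP[of n x] by (metis poly_const_conv)
  then show ?thesis using u d by simp
qed

theorem theorem3:
  fixes n :: nat
  assumes "n \<ge> 3"
  shows "\<exists>p :: mpoly. in_Qx n p \<and> cong_y n (P_lift n) p \<and> irreducible p"
proof -
  have n: "n \<ge> 2" using assms by simp
  obtain p where q: "in_Qx n p" and c: "cong_y n (P_lift n) p" using exists_p[OF n] by blast
  let ?N = "card (Pow {2..n-1})"
  have N1: "?N \<ge> 1" by (simp add: card_Pow)
  have st: "degree (tP n p) = ?N" "lead_coeff (tP n p) = 1" using tP_p_struct[OF n q c] by auto
  interpret tp: comm_ring_hom "tP n" by (rule crh_tP)
  interpret ph: comm_ring_hom "phi n {}" by (rule crh_phi)
  have phip: "phi n {} p = 0"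
    using phi_psi[OF q] hom_cong[OF crh_psi psi_rel c] psi_P[OF n] by metis
  have "irreducible p"
  proof (rule irreducibleI)
    show "p \<noteq> 0"
    proof
      assume "p = 0"
      then show False using st(2) by simp
    qed
    show "\<not> p dvd 1"
    proof
      assume "p dvd 1"
      then obtain r where "1 = p * r" by (auto elim: dvdE)
      then have e: "tP n p * tP n r = 1" by (metis tp.hom_mult tp.hom_one)
      then have "tP n r \<noteq> 0" by auto
      moreover have "tP n p \<noteq> 0" using e by auto
      ultimately have "degree (tP n p) + degree (tP n r) = 0"
        using e degree_mult_eq by (metis degree_1)
      then show False using st(1) N1 by simp
    qed
    fix a b assume ab: "p = a * b"
    let ?A = "tP n a" and ?B = "tP n b"
    have AB: "?A * ?B = tP n p" using ab by (simp add: tp.hom_mult)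
    have A0: "?A \<noteq> 0" and B0: "?B \<noteq> 0" using AB st(2) by auto
    have dsum: "degree ?A + degree ?B = ?N" using AB A0 B0 st(1) by (metis degree_mult_eq)
    have lprod: "lead_coeff ?A * lead_coeff ?B = 1" using AB st(2) by (metis lead_coeff_mult)
    have uA: "lead_coeff ?A dvd 1" and uB: "lead_coeff ?B dvd 1"
      using lprod by (metis dvdI mult.commute)+
    have "phi n {} a * phi n {} b = 0" using ab phip by (simp add: ph.hom_mult)
    then have "phi n {} a = 0 \<or> phi n {} b = 0" by simp
    then show "a dvd 1 \<or> b dvd 1"
    proof
      assume "phi n {} a = 0"
      then have "?N \<le> degree ?A" by (rule root_bound[OF n _ uA])
      then have "degree ?B = 0" using dsum by simp
      then show ?thesis using deg0_unit uB by blast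
    next
      assume "phi n {} b = 0"
      then have "?N \<le> degree ?B" by (rule root_bound[OF n _ uB])
      then have "degree ?A = 0" using dsum by simp
      then show ?thesis using deg0_unit uA by blast
    qed
  qed
  then show ?thesis using q c by blast
qed


end
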